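(* Let $\mathbf{k}$ be a commutative ring, $n\ge0$, $\mathcal{A}=\mathbf{k}[S_n]$. Let $\alpha\in\operatorname{Comp}_n$ and define \[\mathcal{S}_\alpha:=\operatorname{span}_{\mathbf{k}}\{\mathbf{B}_{\operatorname{LRM}'(w)}\,w \mid w\in S_n,\ \widetilde{\operatorname{cLRM}'(w)}\preceq_\pi\widetilde{\alpha}\}.\] Then $\mathcal{S}_\alpha=\mathcal{R}_\alpha$, where $\mathcal{R}_\alpha:=\mathbf{B}_\alpha\mathcal{A}$.
   Context: $S_n$ is the symmetric group on $[n]=\{1,\dots,n\}$, with product $(uw)(i)=u(w(i))$. $\operatorname{Des}(u)=\{i\in[n-1]:u(i)>u(i+1)\}$; for $I\subseteq[n-1]$, $\mathbf{B}_I=\sum_{u\in S_n,\ \operatorname{Des}(u)\subseteq I}u$. A composition $\alpha=(\alpha_1,\dots,\alpha_p)$ of $n$ is a finite sequence of positive integers with sum $n$; $\operatorname{Comp}_n$ is the set of these. $\operatorname{Set}(\alpha)=\{\alpha_1,\alpha_1+\alpha_2,\dots,\alpha_1+\cdots+\alpha_{p-1}\}$ and $\mathbf{B}_\alpha:=\mathbf{B}_{\operatorname{Set}(\alpha)}$. For $I=\{i_1<\cdots<i_{p-1}\}\subseteq[n-1]$, $\operatorname{Comp}(I)=(i_1-i_0,i_2-i_1,\dots,i_p-i_{p-1})$ with $i_0=0$, $i_p=n$ (inverse of $\operatorname{Set}$). $\operatorname{LRM}(w)=\{i\in[n]: w(k)>i \text{ for all } k<w^{-1}(i)\}$ (left-to-right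 minima), $\operatorname{LRM}'(w)=\{\ell-1:\ell\in\operatorname{LRM}(w),\ \ell>1\}$, $\operatorname{cLRM}'(w)=\operatorname{Comp}(\operatorname{LRM}'(w))$. The underlying partition $\widetilde\alpha$ sorts the parts of $\alpha$ weakly decreasingly. For partitions $\lambda=(\lambda_1,\dots,\lambda_k)$, $\mu=(\mu_1,\dots,\mu_l)$ of $n$, $\lambda\preceq_\pi\mu$ means there is a map $f:[k]\to[l]$ with $\mu_j=\sum_{i\in f^{-1}(j)}\lambda_i$ for all $j$ (equivalently, some rearrangement of $\lambda$ refines $\mu$ as a composition). *)

theory Defs
  imports "HOL-Combinatorics.Permutations"
begin

definition perms :: "nat \<Rightarrow> (nat \<Rightarrow> nat) set" where
  "perms n = {p. p permutes {1..n}}"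

text \<open>The group algebra k[S_n]: functions S_n -> k, represented as functions on all
  nat => nat that vanish outside perms n.\<close>
definition grp_alg :: "nat \<Rightarrow> ((nat \<Rightarrow> nat) \<Rightarrow> 'k::comm_ring_1) set" where
  "grp_alg n = {x. \<forall>u. u \<notin> perms n \<longrightarrow> x u = 0}"

text \<open>Multiplication in k[S_n], with product (uv)(i) = u(v(i)).\<close>
definition alg_mult :: "nat \<Rightarrow> ((nat \<Rightarrow> nat) \<Rightarrow> 'k::comm_ring_1) \<Rightarrow> ((nat \<Rightarrow> nat) \<Rightarrow> 'k) \<Rightarrow> ((nat \<Rightarrow> nat) \<Rightarrow> 'k)" where
  "alg_mult n x y = (\<lambda>w. \<Sum>u\<in>perms n. \<Sum>v\<in>perms n. if u \<circ> v = w then x u * y v else 0)"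

definition perm_elem :: "(nat \<Rightarrow> nat) \<Rightarrow> ((nat \<Rightarrow> nat) \<Rightarrow> 'k::comm_ring_1)" where
  "perm_elem w = (\<lambda>u. if u = w then 1 else 0)"

definition Des :: "nat \<Rightarrow> (nat \<Rightarrow> nat) \<Rightarrow> nat set" where
  "Des n u = {i \<in> {1..n-1}. u i > u (Suc i)}"

definition BI :: "nat \<Rightarrow> nat set \<Rightarrow> ((nat \<Rightarrow> nat) \<Rightarrow> 'k::comm_ring_1)" where
  "BI n I = (\<lambda>u. if u \<in> perms n \<and> Des n u \<subseteq> I then 1 else 0)"

definition Comps :: "nat \<Rightarrow> nat list set" where
  "Comps n = {\<alpha>. (\<forall>a\<in>set \<alpha>. a > 0) \<and> sum_list \<alpha> = n}"

definition SetC :: "nat list \<Rightarrow> nat set" where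
  "SetC \<alpha> = {sum_list (take j \<alpha>) | j. 1 \<le> j \<and> j < length \<alpha>}"

definition CompI :: "nat \<Rightarrow> nat set \<Rightarrow> nat list" where
  "CompI n I = (if n = 0 then [] else
     (let is = 0 # sorted_list_of_set I @ [n]
      in map (\<lambda>j. is ! (Suc j) - is ! j) [0..<length is - 1]))"

definition LRM :: "nat \<Rightarrow> (nat \<Rightarrow> nat) \<Rightarrow> nat set" where
  "LRM n w = {i \<in> {1..n}. \<forall>k. 1 \<le> k \<and> k < inv w i \<longrightarrow> w k > i}"

definition LRM' :: "nat \<Rightarrow> (nat \<Rightarrow> nat) \<Rightarrow> nat set" where
  "LRM' n w = {l - 1 | l. l \<in> LRM n w \<and> l > 1}"

definition cLRM' :: "nat \<Rightarrow> (nat \<Rightarrow> nat) \<Rightarrow> nat list" where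
  "cLRM' n w = CompI n (LRM' n w)"

definition underlying_partition :: "nat list \<Rightarrow> nat list" where
  "underlying_partition \<alpha> = rev (sort \<alpha>)"

definition part_le :: "nat list \<Rightarrow> nat list \<Rightarrow> bool" where
  "part_le lam mu = (\<exists>f. (\<forall>i<length lam. f i < length mu) \<and>
      (\<forall>j<length mu. mu ! j = (\<Sum>i\<in>{i. i < length lam \<and> f i = j}. lam ! i)))"

definition kspan :: "'a set \<Rightarrow> ('a \<Rightarrow> ('b \<Rightarrow> 'k::comm_ring_1)) \<Rightarrow> ('b \<Rightarrow> 'k) set" where
  "kspan W g = {x. \<exists>c. x = (\<lambda>u. \<Sum>w\<in>W. c w * g w u)}"

end

theory Submission
  imports Defs
begin
inductive_set spanned :: "((nat\<Rightarrow>nat)\<Rightarrow>'k::comm_ring_1) set \<Rightarrow> ((nat\<Rightarrow>nat)\<Rightarrow>'k) set"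
  for G where
  sp_zero: "(\<lambda>u. 0) \<in> spanned G"
| sp_gen: "g \<in> G \<Longrightarrow> g \<in> spanned G"
| sp_add: "x \<in> spanned G \<Longrightarrow> y \<in> spanned G \<Longrightarrow> (\<lambda>u. x u + y u) \<in> spanned G"
| sp_smult: "x \<in> spanned G \<Longrightarrow> (\<lambda>u. c * x u) \<in> spanned G"

lemma sp_sum:
  assumes "finite S" "\<And>i. i \<in> S \<Longrightarrow> f i \<in> spanned G"
  shows "(\<lambda>u. \<Sum>i\<in>S. f i u) \<in> spanned G"
  using assms
proof (induction S rule: finite_induct)
  case empty
  then show ?case by (simp add: sp_zero)
next
  case (insert x F)
  then show ?case using sp_add[of "f x" G "\<lambda>u. \<Sum>i\<in>F. f i u"] by simp
qed

lemma sp_diff: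
  assumes "x \<in> spanned G" "y \<in> spanned G"
  shows "(\<lambda>u. x u - y u) \<in> spanned G"
proof -
  have "(\<lambda>u. (-1) * y u) \<in> spanned G" by (rule sp_smult[OF assms(2)])
  from sp_add[OF assms(1) this] show ?thesis by simp
qed

lemma sp_mono:
  assumes "G \<subseteq> spanned H"
  shows "spanned G \<subseteq> spanned H"
proof
  fix x assume "x \<in> spanned G"
  then show "x \<in> spanned H"
    by induction (use assms in \<open>auto intro: spanned.intros\<close>)
qed

lemma kspan_eq_spanned:
  assumes "finite W"
  shows "kspan W g = spanned (g ` W)"
proof
  show "kspan W g \<subseteq> spanned (g ` W)"
  proof
    fix x assume "x \<in> kspan W g"
    then obtain c where x: "x = (\<lambda>u. \<Sum>w\<in>W. c w * g w u)" unfolding kspan_def by blast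
    have "(\<lambda>u. \<Sum>w\<in>W. c w * g w u) \<in> spanned (g ` W)"
      using sp_sum[OF assms, of "\<lambda>w u. c w * g w u"]
      by (simp add: sp_smult sp_gen)
    then show "x \<in> spanned (g ` W)" using x by simp
  qed
next
  show "spanned (g ` W) \<subseteq> kspan W g"
  proof
    fix x assume "x \<in> spanned (g ` W)"
    then show "x \<in> kspan W g"
    proof induction
      case sp_zero
      then show ?case unfolding kspan_def by (rule CollectI, rule exI[of _ "\<lambda>_. 0"]) simp
    next
      case (sp_gen y)
      then obtain w0 where w0: "w0 \<in> W" "y = g w0" by blast
      have "\<And>u. (\<Sum>w\<in>W. (if w = w0 then 1 else 0) * g w u) = (\<Sum>w\<in>W. if w = w0 then g w u else 0)"
        by (rule sum.cong) auto
      then have "y = (\<lambda>u. \<Sum>w\<in>W. (if w = w0 then 1 else 0) * g w u)"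
        using w0 assms by (simp add: sum.delta)
      then show ?case unfolding kspan_def mem_Collect_eq by - (rule exI[where x="\<lambda>w. if w = w0 then 1 else 0"], assumption)
    next
      case (sp_add x y)
      then obtain c1 c2 where "x = (\<lambda>u. \<Sum>w\<in>W. c1 w * g w u)" "y = (\<lambda>u. \<Sum>w\<in>W. c2 w * g w u)"
        unfolding kspan_def by blast
      then have "(\<lambda>u. x u + y u) = (\<lambda>u. \<Sum>w\<in>W. (c1 w + c2 w) * g w u)"
        by (simp add: sum.distrib distrib_right)
      then show ?case unfolding kspan_def mem_Collect_eq by - (rule exI[where x="\<lambda>w. c1 w + c2 w"], assumption)
    next
      case (sp_smult x c)
      then obtain c1 where "x = (\<lambda>u. \<Sum>w\<in>W. c1 w * g w u)"
        unfolding kspan_def by blast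
      then have "(\<lambda>u. c * x u) = (\<lambda>u. \<Sum>w\<in>W. (c * c1 w) * g w u)"
        by (simp add: sum_distrib_left mult.assoc)
      then show ?case unfolding kspan_def mem_Collect_eq by - (rule exI[where x="\<lambda>w. c * c1 w"], assumption)
    qed
  qed
qed

lemma finite_perms: "finite (perms n)"
  unfolding perms_def using finite_permutations[of "{1..n}"] by simp

lemma perms_comp: "u \<in> perms n \<Longrightarrow> v \<in> perms n \<Longrightarrow> u \<circ> v \<in> perms n"
  unfolding perms_def by (simp add: permutes_compose)

lemma perms_inv: "u \<in> perms n \<Longrightarrow> inv u \<in> perms n"
  unfolding perms_def by (simp add: permutes_inv)

lemma inner_delta:
  assumes v: "v \<in> perms n"
  shows "(\<Sum>v'\<in>perms n. if u \<circ> v' = w then x u * perm_elem v v' else 0) = (if u \<circ> v = w then x u else 0)"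
proof -
  have "(\<Sum>v'\<in>perms n. if u \<circ> v' = w then x u * perm_elem v v' else 0)
      = (\<Sum>v'\<in>perms n. if v' = v then (if u \<circ> v = w then x u else 0) else 0)"
    unfolding perm_elem_def by (rule sum.cong) auto
  then show ?thesis using v finite_perms by (simp add: sum.delta)
qed

lemma mult_perm_elem:
  assumes v: "v \<in> perms n"
  shows "alg_mult n x (perm_elem v) = (\<lambda>w. if w \<in> perms n then x (w \<circ> inv v) else 0)"
proof
  fix w
  have bv: "bij v" using v unfolding perms_def by (simp add: permutes_bij)
  have "alg_mult n x (perm_elem v) w = (\<Sum>u\<in>perms n. if u \<circ> v = w then x u else 0)"
    unfolding alg_mult_def by (rule sum.cong[OF refl]) (rule inner_delta[OF v])
  also have "\<dots> = (if w \<in> perms n then x (w \<circ> inv v) else 0)"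
  proof (cases "w \<in> perms n")
    case True
    have eq: "\<And>u. (u \<circ> v = w) = (u = w \<circ> inv v)"
    proof
      fix u assume uw: "u \<circ> v = w"
      have "u = u \<circ> (v \<circ> inv v)" using surj_iff[THEN iffD1, OF bij_is_surj[OF bv]] by simp
      then show "u = w \<circ> inv v" using uw by (simp add: o_assoc)
    next
      fix u assume uw: "u = w \<circ> inv v"
      have "w = w \<circ> (inv v \<circ> v)" using inj_iff[THEN iffD1, OF bij_is_inj[OF bv]] by simp
      then show "u \<circ> v = w" using uw by (simp add: o_assoc)
    qed
    have "w \<circ> inv v \<in> perms n" using True v perms_comp perms_inv by blast
    then show ?thesis using True by (simp add: eq finite_perms)
  next
    case False
    have "\<And>u. u \<in> perms n \<Longrightarrow> u \<circ> v \<noteq> w" using False perms_comp v by blast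
    then show ?thesis using False by simp
  qed
  finally show "alg_mult n x (perm_elem v) w = (if w \<in> perms n then x (w \<circ> inv v) else 0)" .
qed

lemma alg_mult_lin:
  assumes "a \<in> grp_alg n"
  shows "alg_mult n x a = (\<lambda>w. \<Sum>v\<in>perms n. a v * alg_mult n x (perm_elem v) w)"
proof
  fix w
  have "alg_mult n x a w = (\<Sum>u\<in>perms n. \<Sum>v\<in>perms n. if u \<circ> v = w then x u * a v else 0)"
    unfolding alg_mult_def by simp
  also have "\<dots> = (\<Sum>v\<in>perms n. \<Sum>u\<in>perms n. if u \<circ> v = w then x u * a v else 0)"
    by (rule sum.swap)
  also have "\<dots> = (\<Sum>v\<in>perms n. a v * alg_mult n x (perm_elem v) w)"
    unfolding alg_mult_def
    by (rule sum.cong[OF refl]) (simp add: inner_delta sum_distrib_left if_distrib mult.commute cong: if_cong)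
  finally show "alg_mult n x a w = (\<Sum>v\<in>perms n. a v * alg_mult n x (perm_elem v) w)" .
qed

lemma alg_mult_add: "alg_mult n x (\<lambda>u. a u + b u) = (\<lambda>w. alg_mult n x a w + alg_mult n x b w)"
  unfolding alg_mult_def
proof (rule ext)
  fix w
  have "\<And>u v. (if u \<circ> v = w then x u * (a v + b v) else 0) = (if u \<circ> v = w then x u * a v else 0) + (if u \<circ> v = w then x u * b v else 0)"
    by (simp add: distrib_left)
  then show "(\<Sum>u\<in>perms n. \<Sum>v\<in>perms n. if u \<circ> v = w then x u * (a v + b v) else 0) =
    (\<Sum>u\<in>perms n. \<Sum>v\<in>perms n. if u \<circ> v = w then x u * a v else 0) + (\<Sum>u\<in>perms n. \<Sum>v\<in>perms n. if u \<circ> v = w then x u * b v else 0)"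
    by (simp add: sum.distrib)
qed

lemma alg_mult_smult: "alg_mult n x (\<lambda>u. c * a u) = (\<lambda>w. c * alg_mult n x a w)"
  unfolding alg_mult_def
proof (rule ext)
  fix w
  have "\<And>u v. (if u \<circ> v = w then x u * (c * a v) else 0) = c * (if u \<circ> v = w then x u * a v else 0)"
    by (simp add: mult.left_commute)
  then show "(\<Sum>u\<in>perms n. \<Sum>v\<in>perms n. if u \<circ> v = w then x u * (c * a v) else 0) =
    c * (\<Sum>u\<in>perms n. \<Sum>v\<in>perms n. if u \<circ> v = w then x u * a v else 0)"
    by (simp add: sum_distrib_left)
qed

lemma in_RI: "a \<in> grp_alg n \<Longrightarrow> y = alg_mult n B a \<Longrightarrow> y \<in> {alg_mult n B a | a. a \<in> grp_alg n}"
  by blast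

lemma R_eq_spanned:
  "{alg_mult n B a | a. a \<in> grp_alg n} = spanned {alg_mult n B (perm_elem v) | v. v \<in> perms n}"
proof
  show "{alg_mult n B a | a. a \<in> grp_alg n} \<subseteq> spanned {alg_mult n B (perm_elem v) | v. v \<in> perms n}"
  proof
    fix y assume "y \<in> {alg_mult n B a | a. a \<in> grp_alg n}"
    then obtain a where a: "a \<in> grp_alg n" "y = alg_mult n B a" by blast
    have "\<And>v. v \<in> perms n \<Longrightarrow> (\<lambda>w. a v * alg_mult n B (perm_elem v) w) \<in> spanned {alg_mult n B (perm_elem v) | v. v \<in> perms n}"
    proof -
      fix v assume "v \<in> perms n"
      then have "alg_mult n B (perm_elem v) \<in> spanned {alg_mult n B (perm_elem v) | v. v \<in> perms n}"
        by (intro sp_gen) blast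
      then show "(\<lambda>w. a v * alg_mult n B (perm_elem v) w) \<in> spanned {alg_mult n B (perm_elem v) | v. v \<in> perms n}"
        by (rule sp_smult)
    qed
    then have "(\<lambda>w. \<Sum>v\<in>perms n. a v * alg_mult n B (perm_elem v) w) \<in> spanned {alg_mult n B (perm_elem v) | v. v \<in> perms n}"
      using sp_sum[OF finite_perms, where f="\<lambda>v w. a v * alg_mult n B (perm_elem v) w"] by simp
    then show "y \<in> spanned {alg_mult n B (perm_elem v) | v. v \<in> perms n}"
      using a alg_mult_lin[OF a(1)] by simp
  qed
next
  show "spanned {alg_mult n B (perm_elem v) | v. v \<in> perms n} \<subseteq> {alg_mult n B a | a. a \<in> grp_alg n}"
  proof
    fix y assume "y \<in> spanned {alg_mult n B (perm_elem v) | v. v \<in> perms n}"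
    then show "y \<in> {alg_mult n B a | a. a \<in> grp_alg n}"
    proof induction
      case sp_zero
      have "alg_mult n B (\<lambda>_. 0) = (\<lambda>u. 0)" unfolding alg_mult_def by (rule ext) (simp only: mult_zero_right if_cancel sum.neutral_const)
      moreover have "(\<lambda>_. 0) \<in> grp_alg n" unfolding grp_alg_def by simp
      ultimately show ?case by (intro in_RI) auto
    next
      case (sp_gen g)
      then obtain v where "v \<in> perms n" "g = alg_mult n B (perm_elem v)" by blast
      moreover have "perm_elem v \<in> grp_alg n" using \<open>v \<in> perms n\<close>
        unfolding grp_alg_def perm_elem_def by auto
      ultimately show ?case by (intro in_RI) auto
    next
      case (sp_add x y)
      then obtain a b where ab: "a \<in> grp_alg n" "x = alg_mult n B a" "b \<in> grp_alg n" "y = alg_mult n B b"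
        by blast
      have "(\<lambda>u. x u + y u) = alg_mult n B (\<lambda>u. a u + b u)"
        unfolding ab by (rule alg_mult_add[symmetric])
      moreover have "(\<lambda>u. a u + b u) \<in> grp_alg n" using ab unfolding grp_alg_def by simp
      ultimately show ?case by (intro in_RI) auto
    next
      case (sp_smult x c)
      then obtain a where ab: "a \<in> grp_alg n" "x = alg_mult n B a" by blast
      have "(\<lambda>u. c * x u) = alg_mult n B (\<lambda>u. c * a u)"
        unfolding ab by (rule alg_mult_smult[symmetric])
      moreover have "(\<lambda>u. c * a u) \<in> grp_alg n" using ab unfolding grp_alg_def by simp
      ultimately show ?case by (intro in_RI) auto
    qed
  qed
qed

lemma BI_mult:
  assumes v: "v \<in> perms n"
  shows "alg_mult n (BI n I) (perm_elem v) =
     (\<lambda>x. if x \<in> perms n \<and> Des n (x \<circ> inv v) \<subseteq> I then 1 else 0)"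
proof -
  have "\<And>x. x \<in> perms n \<Longrightarrow> x \<circ> inv v \<in> perms n" using perms_comp perms_inv v by blast
  then show ?thesis unfolding mult_perm_elem[OF v] BI_def by (intro ext) auto
qed

definition ps :: "nat list \<Rightarrow> nat \<Rightarrow> nat" where
  "ps \<beta> j = sum_list (take j \<beta>)"

lemma ps_0[simp]: "ps \<beta> 0 = 0" by (simp add: ps_def)

lemma ps_Suc: "j < length \<beta> \<Longrightarrow> ps \<beta> (Suc j) = ps \<beta> j + \<beta> ! j"
  by (simp add: ps_def take_Suc_conv_app_nth)

lemma ps_len: "length \<beta> \<le> j \<Longrightarrow> ps \<beta> j = sum_list \<beta>"
  by (simp add: ps_def)

lemma ps_mono: "j \<le> k \<Longrightarrow> ps \<beta> j \<le> ps \<beta> k"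
proof (induction k)
  case 0 then show ?case by simp
next
  case (Suc k)
  then show ?case
  proof (cases "j = Suc k")
    case False
    then have "ps \<beta> j \<le> ps \<beta> k" using Suc by simp
    also have "ps \<beta> k \<le> ps \<beta> (Suc k)"
      by (cases "k < length \<beta>") (auto simp: ps_Suc ps_len)
    finally show ?thesis .
  qed simp
qed

lemma ps_strict:
  assumes pos: "\<forall>a\<in>set \<beta>. a > 0" and jk: "j < k" "k \<le> length \<beta>"
  shows "ps \<beta> j < ps \<beta> k"
proof -
  have "j < length \<beta>" using jk by simp
  then have "ps \<beta> j < ps \<beta> (Suc j)" using pos by (simp add: ps_Suc)
  also have "ps \<beta> (Suc j) \<le> ps \<beta> k" using jk by (intro ps_mono) simp
  finally show ?thesis .
qed

lemma ps_cover:
  assumes "m \<le> length \<beta>" "i < ps \<beta> m"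
  shows "\<exists>j<m. ps \<beta> j \<le> i \<and> i < ps \<beta> (Suc j)"
  using assms
proof (induction m)
  case 0 then show ?case by simp
next
  case (Suc m)
  show ?case
  proof (cases "i < ps \<beta> m")
    case True
    then obtain j where "j<m" "ps \<beta> j \<le> i \<and> i < ps \<beta> (Suc j)" using Suc by auto
    then show ?thesis by (intro exI[of _ j]) auto
  next
    case False
    then show ?thesis using Suc.prems by (intro exI[of _ m]) auto
  qed
qed

lemma ps_sum: "\<beta> \<in> Comps n \<Longrightarrow> ps \<beta> (length \<beta>) = n"
  by (simp add: ps_len Comps_def)

lemma SetC_ps: "SetC \<beta> = {ps \<beta> j | j. 1 \<le> j \<and> j < length \<beta>}"
  unfolding SetC_def ps_def by simp

lemma ps_less_iff:
  assumes pos: "\<forall>a\<in>set \<beta>. a > 0" and "j \<le> length \<beta>" "k \<le> length \<beta>"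
  shows "ps \<beta> j < ps \<beta> k \<longleftrightarrow> j < k"
  using ps_strict[OF pos] ps_mono assms by (meson leD le_less_linear)

lemma ps_eq_iff:
  assumes pos: "\<forall>a\<in>set \<beta>. a > 0" and "j \<le> length \<beta>" "k \<le> length \<beta>"
  shows "ps \<beta> j = ps \<beta> k \<longleftrightarrow> j = k"
  using ps_less_iff[OF assms] ps_less_iff[OF pos assms(3) assms(2)] by (cases j k rule: linorder_cases) auto

lemma nonSetC:
  assumes b: "\<beta> \<in> Comps n"
  shows "(1 \<le> i \<and> i \<le> n - 1 \<and> i \<notin> SetC \<beta>) \<longleftrightarrow> (\<exists>j<length \<beta>. ps \<beta> j < i \<and> i < ps \<beta> (Suc j))"
proof -
  have pos: "\<forall>a\<in>set \<beta>. a > 0" and sn: "ps \<beta> (length \<beta>) = n"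
    using b ps_sum unfolding Comps_def by auto
  show ?thesis
  proof
    assume a: "1 \<le> i \<and> i \<le> n - 1 \<and> i \<notin> SetC \<beta>"
    then have "i < n" by arith
    then have "i < ps \<beta> (length \<beta>)" using sn by simp
    then obtain j where j: "j < length \<beta>" "ps \<beta> j \<le> i" "i < ps \<beta> (Suc j)"
      using ps_cover[of "length \<beta>" \<beta> i] by auto
    have "ps \<beta> j \<noteq> i"
    proof
      assume e: "ps \<beta> j = i"
      show False
      proof (cases "j = 0")
        case True then show False using e a by simp
      next
        case False
        then have "i \<in> SetC \<beta>" unfolding SetC_ps using e j by force
        then show False using a by simp
      qed
    qed
    then show "\<exists>j<length \<beta>. ps \<beta> j < i \<and> i < ps \<beta> (Suc j)" using j by auto
  next
    assume "\<exists>j<length \<beta>. ps \<beta> j < i \<and> i < ps \<beta> (Suc j)"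
    then obtain j where j: "j < length \<beta>" "ps \<beta> j < i" "i < ps \<beta> (Suc j)" by blast
    have "i < n" using j ps_mono[of "Suc j" "length \<beta>" \<beta>] sn by simp
    moreover have "i \<notin> SetC \<beta>"
    proof
      assume "i \<in> SetC \<beta>"
      then obtain k where k: "1 \<le> k" "k < length \<beta>" "i = ps \<beta> k" unfolding SetC_ps by blast
      have "j < k" using ps_less_iff[OF pos, of j k] j k by simp
      moreover have "k < Suc j" using ps_less_iff[OF pos, of k "Suc j"] j k by simp
      ultimately show False by simp
    qed
    ultimately show "1 \<le> i \<and> i \<le> n - 1 \<and> i \<notin> SetC \<beta>" using j by simp
  qed
qed

definition blocks :: "nat list \<Rightarrow> (nat \<Rightarrow> nat) \<Rightarrow> nat list list" where
  "blocks \<beta> v = map (\<lambda>j. map (inv v) [Suc (ps \<beta> j)..<Suc (ps \<beta> (Suc j))]) [0..<length \<beta>]"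

definition lin :: "nat \<Rightarrow> nat list set \<Rightarrow> (nat \<Rightarrow> nat) \<Rightarrow> 'k::comm_ring_1" where
  "lin n \<Phi> = (\<lambda>x. if x \<in> perms n \<and> (\<forall>c\<in>\<Phi>. sorted_wrt (\<lambda>i j. x i < x j) c) then 1 else 0)"

definition fam :: "nat \<Rightarrow> nat list set \<Rightarrow> bool" where
  "fam n \<Phi> \<longleftrightarrow> finite \<Phi> \<and> (\<forall>c\<in>\<Phi>. c \<noteq> [] \<and> distinct c) \<and>
     (\<forall>c\<in>\<Phi>. \<forall>d\<in>\<Phi>. c \<noteq> d \<longrightarrow> set c \<inter> set d = {}) \<and> \<Union>(set ` \<Phi>) = {1..n}"

definition sizes :: "nat list set \<Rightarrow> nat multiset" where
  "sizes \<Phi> = image_mset length (mset_set \<Phi>)"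

lemma sorted_map_upt:
  assumes "transp P"
  shows "sorted_wrt P (map f [a..<b]) \<longleftrightarrow> (\<forall>i. a \<le> i \<and> Suc i < b \<longrightarrow> P (f i) (f (Suc i)))"
proof -
  have "sorted_wrt P (map f [a..<b]) \<longleftrightarrow> (\<forall>k. Suc k < b - a \<longrightarrow> P (f (a + k)) (f (a + Suc k)))"
    by (subst sorted_wrt_iff_nth_Suc_transp[OF assms]) auto
  also have "\<dots> \<longleftrightarrow> (\<forall>i. a \<le> i \<and> Suc i < b \<longrightarrow> P (f i) (f (Suc i)))"
  proof
    assume H: "\<forall>k. Suc k < b - a \<longrightarrow> P (f (a + k)) (f (a + Suc k))"
    show "\<forall>i. a \<le> i \<and> Suc i < b \<longrightarrow> P (f i) (f (Suc i))"
    proof (intro allI impI)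
      fix i assume "a \<le> i \<and> Suc i < b"
      then show "P (f i) (f (Suc i))" using H[rule_format, of "i - a"] by auto
    qed
  next
    assume H: "\<forall>i. a \<le> i \<and> Suc i < b \<longrightarrow> P (f i) (f (Suc i))"
    show "\<forall>k. Suc k < b - a \<longrightarrow> P (f (a + k)) (f (a + Suc k))"
      using H by auto
  qed
  finally show ?thesis .
qed

lemma perms_inj: "x \<in> perms n \<Longrightarrow> inj x"
  unfolding perms_def using permutes_inj by blast

lemma perms_bij: "x \<in> perms n \<Longrightarrow> bij x"
  unfolding perms_def using permutes_bij by blast

lemma Des_sub_iff:
  assumes "u \<in> perms n"
  shows "Des n u \<subseteq> I \<longleftrightarrow> (\<forall>i. 1 \<le> i \<and> i \<le> n - 1 \<and> i \<notin> I \<longrightarrow> u i < u (Suc i))"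
proof -
  have "\<And>i. u i \<noteq> u (Suc i)" using perms_inj[OF assms] by (simp add: inj_eq)
  then have "\<And>i. (u i > u (Suc i) \<longrightarrow> i \<in> I) \<longleftrightarrow> (i \<notin> I \<longrightarrow> u i < u (Suc i))"
    by (metis less_asym linorder_neqE_nat)
  moreover have "Des n u \<subseteq> I \<longleftrightarrow> (\<forall>i. 1 \<le> i \<and> i \<le> n - 1 \<longrightarrow> (u i > u (Suc i) \<longrightarrow> i \<in> I))"
    unfolding Des_def by auto
  ultimately show ?thesis by blast
qed

lemma blocks_sorted_iff:
  assumes b: "\<beta> \<in> Comps n" and v: "v \<in> perms n" and x: "x \<in> perms n"
  shows "Des n (x \<circ> inv v) \<subseteq> SetC \<beta> \<longleftrightarrow> (\<forall>c\<in>set (blocks \<beta> v). sorted_wrt (\<lambda>i j. x i < x j) c)"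
proof -
  have tr: "transp (\<lambda>i j. x i < (x j::nat))" by (auto simp: transp_def)
  have "Des n (x \<circ> inv v) \<subseteq> SetC \<beta> \<longleftrightarrow>
     (\<forall>i. 1 \<le> i \<and> i \<le> n - 1 \<and> i \<notin> SetC \<beta> \<longrightarrow> x (inv v i) < x (inv v (Suc i)))"
    using Des_sub_iff[of "x \<circ> inv v" n] perms_comp perms_inv v x by simp
  also have "\<dots> \<longleftrightarrow> (\<forall>i. (\<exists>j<length \<beta>. ps \<beta> j < i \<and> i < ps \<beta> (Suc j)) \<longrightarrow> x (inv v i) < x (inv v (Suc i)))"
    using nonSetC[OF b] by simp
  also have "\<dots> \<longleftrightarrow> (\<forall>j<length \<beta>. \<forall>i. Suc (ps \<beta> j) \<le> i \<and> Suc i < Suc (ps \<beta> (Suc j)) \<longrightarrow> x (inv v i) < x (inv v (Suc i)))"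
    by (simp add: Suc_le_eq) blast
  also have "\<dots> \<longleftrightarrow> (\<forall>j<length \<beta>. sorted_wrt (\<lambda>i j. x i < x j) (map (inv v) [Suc (ps \<beta> j)..<Suc (ps \<beta> (Suc j))]))"
    by (simp only: sorted_map_upt[OF tr] Suc_less_eq)
  also have "\<dots> \<longleftrightarrow> (\<forall>c\<in>set (blocks \<beta> v). sorted_wrt (\<lambda>i j. x i < x j) c)"
    unfolding blocks_def by auto
  finally show ?thesis .
qed

lemma BI_blocks:
  assumes b: "\<beta> \<in> Comps n" and v: "v \<in> perms n"
  shows "alg_mult n (BI n (SetC \<beta>)) (perm_elem v) = lin n (set (blocks \<beta> v))"
  unfolding BI_mult[OF v] lin_def
  using blocks_sorted_iff[OF b v] by (intro ext) auto

lemma length_blocks: "length (blocks \<beta> v) = length \<beta>"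
  by (simp add: blocks_def)

lemma nth_blocks: "j < length \<beta> \<Longrightarrow> blocks \<beta> v ! j = map (inv v) [Suc (ps \<beta> j)..<Suc (ps \<beta> (Suc j))]"
  by (simp add: blocks_def)

lemma map_length_blocks: "map length (blocks \<beta> v) = \<beta>"
proof (rule nth_equalityI)
  show "length (map length (blocks \<beta> v)) = length \<beta>" by (simp add: length_blocks)
  fix j assume "j < length (map length (blocks \<beta> v))"
  then have j: "j < length \<beta>" by (simp add: length_blocks)
  then show "map length (blocks \<beta> v) ! j = \<beta> ! j"
    using j by (simp add: nth_blocks length_blocks ps_Suc)
qed

lemma set_nth_blocks:
  "j < length \<beta> \<Longrightarrow> set (blocks \<beta> v ! j) = inv v ` {i. ps \<beta> j < i \<and> i \<le> ps \<beta> (Suc j)}"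
  by (auto simp: nth_blocks)

lemma fam_blocks:
  assumes b: "\<beta> \<in> Comps n" and v: "v \<in> perms n"
  shows "fam n (set (blocks \<beta> v))" "distinct (blocks \<beta> v)"
proof -
  have pos: "\<forall>a\<in>set \<beta>. a > 0" and sn: "ps \<beta> (length \<beta>) = n"
    using b ps_sum unfolding Comps_def by auto
  have iv: "inj (inv v)" using perms_inv[OF v] perms_inj by blast
  have ivp: "inv v permutes {1..n}" using perms_inv[OF v] unfolding perms_def by simp
  have ne: "\<And>j. j < length \<beta> \<Longrightarrow> blocks \<beta> v ! j \<noteq> []"
  proof -
    fix j assume j: "j < length \<beta>"
    have "ps \<beta> j < ps \<beta> (Suc j)" using ps_strict[OF pos, of j "Suc j"] j by simp
    then show "blocks \<beta> v ! j \<noteq> []" using j by (simp add: nth_blocks)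
  qed
  have disj: "\<And>j k. j < length \<beta> \<Longrightarrow> k < length \<beta> \<Longrightarrow> j \<noteq> k \<Longrightarrow>
      set (blocks \<beta> v ! j) \<inter> set (blocks \<beta> v ! k) = {}"
  proof -
    fix j k assume jk: "j < length \<beta>" "k < length \<beta>" "j \<noteq> k"
    have "{i. ps \<beta> j < i \<and> i \<le> ps \<beta> (Suc j)} \<inter> {i. ps \<beta> k < i \<and> i \<le> ps \<beta> (Suc k)} = {}"
    proof (cases "j < k")
      case True
      then have "ps \<beta> (Suc j) \<le> ps \<beta> k" by (intro ps_mono) simp
      then show ?thesis by auto
    next
      case False
      then have "ps \<beta> (Suc k) \<le> ps \<beta> j" using jk by (intro ps_mono) simp
      then show ?thesis by auto
    qed
    moreover have "set (blocks \<beta> v ! j) \<inter> set (blocks \<beta> v ! k) =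
      inv v ` ({i. ps \<beta> j < i \<and> i \<le> ps \<beta> (Suc j)} \<inter> {i. ps \<beta> k < i \<and> i \<le> ps \<beta> (Suc k)})"
      using jk by (simp only: set_nth_blocks image_Int[OF iv])
    ultimately show "set (blocks \<beta> v ! j) \<inter> set (blocks \<beta> v ! k) = {}" by simp
  qed
  have dist: "\<And>j. j < length \<beta> \<Longrightarrow> distinct (blocks \<beta> v ! j)"
  proof -
    fix j assume "j < length \<beta>"
    have ivA: "\<And>A. inj_on (inv v) A" using iv by (meson inj_on_subset subset_UNIV)
    show "distinct (blocks \<beta> v ! j)" using \<open>j < length \<beta>\<close> by (simp add: nth_blocks distinct_map ivA)
  qed
  show dl: "distinct (blocks \<beta> v)"
  proof (subst distinct_conv_nth, intro allI impI)
    fix j k assume "j < length (blocks \<beta> v)" "k < length (blocks \<beta> v)" "j \<noteq> k"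
    show "blocks \<beta> v ! j \<noteq> blocks \<beta> v ! k"
    proof
      assume eq: "blocks \<beta> v ! j = blocks \<beta> v ! k"
      have "set (blocks \<beta> v ! j) = {}" using disj[of j k] eq \<open>j < length (blocks \<beta> v)\<close> \<open>k < length (blocks \<beta> v)\<close> \<open>j \<noteq> k\<close>
        by (simp add: length_blocks)
      then show False using ne[of j] \<open>j < length (blocks \<beta> v)\<close> by (simp add: length_blocks)
    qed
  qed
  have un: "\<Union>(set ` set (blocks \<beta> v)) = {1..n}"
  proof -
    have "set (blocks \<beta> v) = (!) (blocks \<beta> v) ` {..<length \<beta>}"
      by (metis atLeast0LessThan length_blocks list.set_map map_nth set_upt)
    then have "\<Union>(set ` set (blocks \<beta> v)) = (\<Union>j<length \<beta>. set (blocks \<beta> v ! j))"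
      by simp
    also have "\<dots> = inv v ` (\<Union>j<length \<beta>. {i. ps \<beta> j < i \<and> i \<le> ps \<beta> (Suc j)})"
      by (simp add: set_nth_blocks image_UN)
    also have "(\<Union>j<length \<beta>. {i. ps \<beta> j < i \<and> i \<le> ps \<beta> (Suc j)}) = {1..n}"
    proof
      show "(\<Union>j<length \<beta>. {i. ps \<beta> j < i \<and> i \<le> ps \<beta> (Suc j)}) \<subseteq> {1..n}"
      proof
        fix i assume "i \<in> (\<Union>j<length \<beta>. {i. ps \<beta> j < i \<and> i \<le> ps \<beta> (Suc j)})"
        then obtain j where j: "j < length \<beta>" "ps \<beta> j < i" "i \<le> ps \<beta> (Suc j)" by blast
        moreover have "ps \<beta> (Suc j) \<le> n" using ps_mono[of "Suc j" "length \<beta>" \<beta>] sn j(1) by simp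
        ultimately show "i \<in> {1..n}" by simp
      qed
    next
      show "{1..n} \<subseteq> (\<Union>j<length \<beta>. {i. ps \<beta> j < i \<and> i \<le> ps \<beta> (Suc j)})"
      proof
        fix i assume "i \<in> {1..n}"
        then have "i - 1 < ps \<beta> (length \<beta>)" using sn by auto
        then obtain j where "j < length \<beta>" "ps \<beta> j \<le> i - 1" "i - 1 < ps \<beta> (Suc j)"
          using ps_cover[of "length \<beta>" \<beta> "i - 1"] by auto
        moreover have "ps \<beta> j < i \<and> i \<le> ps \<beta> (Suc j)" using calculation \<open>i \<in> {1..n}\<close> by auto
        ultimately show "i \<in> (\<Union>j<length \<beta>. {i. ps \<beta> j < i \<and> i \<le> ps \<beta> (Suc j)})"
          by blast
      qed
    qed
    also have "inv v ` {1..n} = {1..n}" using ivp by (rule permutes_image)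
    finally show ?thesis .
  qed
  show "fam n (set (blocks \<beta> v))"
    unfolding fam_def
  proof (intro conjI ballI impI)
    show "finite (set (blocks \<beta> v))" by simp
  next
    fix c assume "c \<in> set (blocks \<beta> v)"
    then obtain j where "j < length \<beta>" "c = blocks \<beta> v ! j" by (auto simp: in_set_conv_nth length_blocks)
    then show "c \<noteq> []" "distinct c" using ne dist by auto
  next
    fix c d assume "c \<in> set (blocks \<beta> v)" "d \<in> set (blocks \<beta> v)" "c \<noteq> d"
    then obtain j k where "j < length \<beta>" "c = blocks \<beta> v ! j" "k < length \<beta>" "d = blocks \<beta> v ! k"
      by (auto simp: in_set_conv_nth length_blocks)
    then show "set c \<inter> set d = {}" using disj \<open>c \<noteq> d\<close> by blast
  next
    show "\<Union>(set ` set (blocks \<beta> v)) = {1..n}" by (rule un)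
  qed
qed

lemma sizes_blocks:
  assumes b: "\<beta> \<in> Comps n" and v: "v \<in> perms n"
  shows "sizes (set (blocks \<beta> v)) = mset \<beta>"
  unfolding sizes_def using fam_blocks(2)[OF b v]
  by (simp add: mset_set_set map_length_blocks mset_map[symmetric] del: mset_map)

lemma Comps_pos: "\<beta> \<in> Comps n \<Longrightarrow> \<forall>a\<in>set \<beta>. a > 0"
  by (simp add: Comps_def)

lemma Comps_0: "\<beta> \<in> Comps 0 \<Longrightarrow> \<beta> = []"
  by (cases \<beta>) (auto simp: Comps_def)

lemma CompI_SetC:
  assumes b: "\<beta> \<in> Comps n"
  shows "CompI n (SetC \<beta>) = \<beta>"
proof (cases "n = 0")
  case True
  then have "\<beta> = []" using Comps_0 b by simp
  then show ?thesis using True by (simp add: CompI_def)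
next
  case False
  have pos: "\<forall>a\<in>set \<beta>. a > 0" using Comps_pos[OF b] .
  have sn: "ps \<beta> (length \<beta>) = n" using ps_sum[OF b] .
  have ne: "length \<beta> \<ge> 1" using False sn by (cases \<beta>) auto
  have sorted: "sorted_wrt (<) (map (ps \<beta>) [1..<length \<beta>])"
    unfolding sorted_wrt_map
    by (rule sorted_wrt_mono_rel[OF _ sorted_wrt_upt]) (auto intro: ps_strict[OF pos])
  have "set (map (ps \<beta>) [1..<length \<beta>]) = SetC \<beta>"
    unfolding SetC_ps by auto
  moreover have "finite (SetC \<beta>)" unfolding SetC_ps by simp
  ultimately have sl: "sorted_list_of_set (SetC \<beta>) = map (ps \<beta>) [1..<length \<beta>]"
    using strict_sorted_equal[OF sorted] sorted_list_of_set(1) strict_sorted_list_of_set by metis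
  have upt: "[0..<Suc (length \<beta>)] = 0 # [1..<length \<beta>] @ [length \<beta>]"
  proof -
    have "[0..<length \<beta>] = 0 # [1..<length \<beta>]" using ne upt_conv_Cons[of 0 "length \<beta>"] by (cases \<beta>) auto
    then show ?thesis by simp
  qed
  have is_eq: "0 # sorted_list_of_set (SetC \<beta>) @ [n] = map (ps \<beta>) [0..<Suc (length \<beta>)]"
    unfolding sl upt using sn by simp
  define M where "M = map (ps \<beta>) [0..<Suc (length \<beta>)]"
  have c: "CompI n (SetC \<beta>) = map (\<lambda>j. M ! Suc j - M ! j) [0..<length M - 1]"
    unfolding CompI_def Let_def is_eq[folded M_def] by (simp only: False if_False)
  show ?thesis unfolding c
  proof (rule nth_equalityI)
    show "length (map (\<lambda>j. M ! Suc j - M ! j) [0..<length M - 1]) = length \<beta>"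
      by (simp add: M_def)
    fix j assume "j < length (map (\<lambda>j. M ! Suc j - M ! j) [0..<length M - 1])"
    then have j: "j < length \<beta>" by (simp add: M_def)
    have a: "M ! Suc j = ps \<beta> (Suc j)"
      using j unfolding M_def by (simp del: upt_Suc)
    have b: "M ! j = ps \<beta> j"
      using j unfolding M_def by (simp del: upt_Suc)
    have lm: "length M - 1 = length \<beta>" by (simp add: M_def)
    show "map (\<lambda>j. M ! Suc j - M ! j) [0..<length M - 1] ! j = \<beta> ! j"
      using j unfolding lm by (simp add: a b ps_Suc)
  qed
qed

lemma telescope:
  assumes s: "sorted_wrt (<) xs" and ne: "xs \<noteq> []" and z: "xs ! 0 = (0::nat)"
  defines "\<beta> \<equiv> map (\<lambda>j. xs ! Suc j - xs ! j) [0..<length xs - 1]"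
  shows "\<And>j. j < length xs \<Longrightarrow> ps \<beta> j = xs ! j" "\<forall>a\<in>set \<beta>. a > 0" "length \<beta> = length xs - 1"
proof -
  show "length \<beta> = length xs - 1" by (simp add: \<beta>_def)
  show "\<forall>a\<in>set \<beta>. a > 0"
    unfolding \<beta>_def using sorted_wrt_nth_less[OF s] by auto
  fix j assume "j < length xs"
  then show "ps \<beta> j = xs ! j"
  proof (induction j)
    case 0 then show ?case using z by simp
  next
    case (Suc j)
    then have "ps \<beta> (Suc j) = ps \<beta> j + \<beta> ! j" by (intro ps_Suc) (simp add: \<beta>_def)
    also have "\<dots> = xs ! j + (xs ! Suc j - xs ! j)"
    proof -
      have "j < length xs - 1" using Suc.prems by simp
      then show ?thesis using Suc by (simp add: \<beta>_def)
    qed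
    also have "\<dots> = xs ! Suc j" using sorted_wrt_nth_less[OF s, of j "Suc j"] Suc.prems by simp
    finally show ?case .
  qed
qed

lemma SetC_CompI:
  assumes I: "I \<subseteq> {1..n-1}"
  shows "CompI n I \<in> Comps n \<and> SetC (CompI n I) = I"
proof (cases "n = 0")
  case True
  then have "I = {}" using I by auto
  then show ?thesis using True by (simp add: CompI_def Comps_def SetC_def)
next
  case False
  have fin: "finite I" using I finite_subset by blast
  define xs where "xs = sorted_list_of_set I"
  have sx: "sorted_wrt (<) xs" "set xs = I" using fin unfolding xs_def by auto
  define ys where "ys = 0 # xs @ [n]"
  have xs_lt: "\<forall>x\<in>set xs. 0 < x \<and> x < n" using sx I False by force
  have sis: "sorted_wrt (<) ys"
    unfolding ys_def using sx xs_lt False by (auto simp: sorted_wrt_append)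
  define \<beta> where "\<beta> = map (\<lambda>j. ys ! Suc j - ys ! j) [0..<length ys - 1]"
  have c: "CompI n I = \<beta>" unfolding CompI_def \<beta>_def ys_def xs_def Let_def using False by simp
  note T = telescope[OF sis _ _, folded \<beta>_def]
  have psj: "\<And>j. j < length ys \<Longrightarrow> ps \<beta> j = ys ! j" using T(1) by (simp add: ys_def)
  have pos: "\<forall>a\<in>set \<beta>. a > 0" using T(2) by (simp add: ys_def)
  have lb: "length \<beta> = length xs + 1" using T(3) by (simp add: ys_def)
  have "sum_list \<beta> = n"
  proof -
    have "sum_list \<beta> = ps \<beta> (length \<beta>)" by (simp add: ps_len)
    also have "\<dots> = ys ! (length xs + 1)" using psj[of "length xs + 1"] lb by (simp add: ys_def)
    also have "\<dots> = n" by (simp add: ys_def nth_append)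
    finally show ?thesis .
  qed
  then have bc: "\<beta> \<in> Comps n" using pos by (simp add: Comps_def)
  have "SetC \<beta> = ps \<beta> ` {1..<length \<beta>}" unfolding SetC_ps by auto
  also have "\<dots> = (!) ys ` {1..<length xs + 1}"
    using psj lb by (intro image_cong) (auto simp: ys_def)
  also have "\<dots> = {ys ! j | j. 1 \<le> j \<and> j < length xs + 1}" by auto
  also have "\<dots> = set xs"
  proof
    show "{ys ! j | j. 1 \<le> j \<and> j < length xs + 1} \<subseteq> set xs"
    proof
      fix y assume "y \<in> {ys ! j | j. 1 \<le> j \<and> j < length xs + 1}"
      then obtain j where j: "1 \<le> j" "j < length xs + 1" "y = ys ! j" by blast
      then have "y = xs ! (j - 1)" by (cases j) (auto simp: ys_def nth_append)
      then show "y \<in> set xs" using j by simp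
    qed
  next
    show "set xs \<subseteq> {ys ! j | j. 1 \<le> j \<and> j < length xs + 1}"
    proof
      fix y assume "y \<in> set xs"
      then obtain k where k: "k < length xs" "y = xs ! k" by (auto simp: in_set_conv_nth)
      then have "y = ys ! Suc k" by (simp add: ys_def nth_append)
      then show "y \<in> {ys ! j | j. 1 \<le> j \<and> j < length xs + 1}" using k by force
    qed
  qed
  finally show ?thesis using bc c sx by simp
qed

lemma nth_concat_ps:
  "j < length E \<Longrightarrow> r < length (E ! j) \<Longrightarrow> concat E ! (ps (map length E) j + r) = E ! j ! r"
proof (induction E arbitrary: j)
  case Nil then show ?case by simp
next
  case (Cons c E)
  show ?case
  proof (cases j)
    case 0 then show ?thesis using Cons.prems by (simp add: nth_append)
  next
    case (Suc j')
    have "ps (map length (c # E)) j = length c + ps (map length E) j'"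
      by (simp add: ps_def Suc)
    then show ?thesis using Cons.IH[of j'] Cons.prems Suc by (simp add: nth_append)
  qed
qed

lemma ps_map_length: "ps (map length E) (length E) = length (concat E)"
  by (simp add: ps_len length_concat)

lemma concat_decomp:
  assumes "t < length (concat E)"
  shows "\<exists>j r. j < length E \<and> r < length (E ! j) \<and> t = ps (map length E) j + r"
proof -
  have "t < ps (map length E) (length (map length E))" using assms ps_map_length[of E] by simp
  then obtain j where j: "j < length E" "ps (map length E) j \<le> t" "t < ps (map length E) (Suc j)"
    using ps_cover[of "length (map length E)" "map length E" t] by auto
  have "ps (map length E) (Suc j) = ps (map length E) j + length (E ! j)"
    using j by (simp add: ps_Suc)
  then show ?thesis using j by (intro exI[of _ j] exI[of _ "t - ps (map length E) j"]) auto
qed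

definition winvE :: "nat \<Rightarrow> nat list list \<Rightarrow> nat \<Rightarrow> nat" where
  "winvE n E = (\<lambda>u. if 1 \<le> u \<and> u \<le> n then concat E ! (u - 1) else u)"

definition wE :: "nat \<Rightarrow> nat list list \<Rightarrow> nat \<Rightarrow> nat" where
  "wE n E = inv (winvE n E)"

lemma fam_list_concat:
  assumes f: "fam n (set E)" and d: "distinct E"
  shows "distinct (concat E)" "set (concat E) = {1..n}" "length (concat E) = n"
proof -
  have "[] \<notin> set E" using f unfolding fam_def by auto
  then have "removeAll [] E = E" by (rule removeAll_id)
  have f1: "\<forall>c\<in>set E. c \<noteq> [] \<and> distinct c" and f2: "\<forall>c\<in>set E. \<forall>d\<in>set E. c \<noteq> d \<longrightarrow> set c \<inter> set d = {}"
    and f3: "\<Union>(set ` set E) = {1..n}" using f unfolding fam_def by blast+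
  show dc: "distinct (concat E)" unfolding distinct_concat_iff \<open>removeAll [] E = E\<close>
    using d f1 f2 by blast
  show sc: "set (concat E) = {1..n}" using f3 by simp
  show "length (concat E) = n" using distinct_card[OF dc] sc by simp
qed

lemma winvE_permutes:
  assumes f: "fam n (set E)" and d: "distinct E"
  shows "winvE n E permutes {1..n}"
proof (rule bij_imp_permutes)
  note F = fam_list_concat[OF f d]
  show "bij_betw (winvE n E) {1..n} {1..n}"
    unfolding bij_betw_def
  proof
    show "inj_on (winvE n E) {1..n}"
    proof (rule inj_onI)
      fix a b assume ab: "a \<in> {1..n}" "b \<in> {1..n}" "winvE n E a = winvE n E b"
      have a1: "1 \<le> a" "a \<le> n" "1 \<le> b" "b \<le> n" using ab(1,2) by auto
      have e: "concat E ! (a - 1) = concat E ! (b - 1)" using ab(3) a1 by (simp add: winvE_def)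
      have l: "a - 1 < length (concat E)" "b - 1 < length (concat E)" using a1 F(3) by auto
      have "a - 1 = b - 1" using nth_eq_iff_index_eq[OF F(1) l] e by blast
      then show "a = b" using a1 by arith
    qed
    show "winvE n E ` {1..n} = {1..n}"
    proof
      show "winvE n E ` {1..n} \<subseteq> {1..n}"
      proof
        fix y assume "y \<in> winvE n E ` {1..n}"
        then obtain u where u: "u \<in> {1..n}" "y = winvE n E u" by blast
        then have "y = concat E ! (u - 1)" by (simp add: winvE_def)
        moreover have "u - 1 < length (concat E)" using u F(3) by auto
        ultimately have "y \<in> set (concat E)" by (simp only: nth_mem)
        then show "y \<in> {1..n}" using F(2) by blast
      qed
      show "{1..n} \<subseteq> winvE n E ` {1..n}"
      proof
        fix y assume "y \<in> {1..n}"
        then have "y \<in> set (concat E)" using F(2) by blast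
        then obtain t where t: "t < length (concat E)" "concat E ! t = y" unfolding in_set_conv_nth by blast
        then have "winvE n E (Suc t) = y" using F(3) by (simp add: winvE_def)
        moreover have "Suc t \<in> {1..n}" using t F(3) by simp
        ultimately show "y \<in> winvE n E ` {1..n}" by (metis rev_image_eqI)
      qed
    qed
  qed
  show "\<And>x. x \<notin> {1..n} \<Longrightarrow> winvE n E x = x" by (auto simp: winvE_def)
qed

lemma wE_perms:
  assumes f: "fam n (set E)" and d: "distinct E"
  shows "wE n E \<in> perms n" "inv (wE n E) = winvE n E"
proof -
  have p: "winvE n E permutes {1..n}" by (rule winvE_permutes[OF f d])
  then show "wE n E \<in> perms n" unfolding wE_def perms_def by (simp add: permutes_inv)
  show "inv (wE n E) = winvE n E" unfolding wE_def using permutes_bij[OF p] by (simp add: inv_inv_eq)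
qed

lemma fam_list_comp:
  assumes f: "fam n (set E)" and d: "distinct E"
  shows "map length E \<in> Comps n"
proof -
  have "\<forall>a\<in>set (map length E). a > 0" using f unfolding fam_def by auto
  moreover have "sum_list (map length E) = n" using fam_list_concat(3)[OF f d] by (simp add: length_concat)
  ultimately show ?thesis by (simp add: Comps_def)
qed

lemma blocks_wE:
  assumes f: "fam n (set E)" and d: "distinct E"
  shows "blocks (map length E) (wE n E) = E"
proof (rule nth_equalityI)
  show "length (blocks (map length E) (wE n E)) = length E" by (simp add: length_blocks)
  fix j assume "j < length (blocks (map length E) (wE n E))"
  then have j: "j < length E" by (simp add: length_blocks)
  let ?p = "ps (map length E)"
  have sj: "?p (Suc j) = ?p j + length (E ! j)" using j by (simp add: ps_Suc)
  have le: "?p (Suc j) \<le> n"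
    using ps_mono[of "Suc j" "length E" "map length E"] j ps_map_length[of E] fam_list_concat(3)[OF f d] by simp
  show "blocks (map length E) (wE n E) ! j = E ! j"
  proof (rule nth_equalityI)
    show lenb: "length (blocks (map length E) (wE n E) ! j) = length (E ! j)"
      using j sj by (simp add: nth_blocks del: upt_Suc)
    fix r assume "r < length (blocks (map length E) (wE n E) ! j)"
    then have r: "r < length (E ! j)" using lenb by simp
    have "blocks (map length E) (wE n E) ! j ! r = winvE n E (Suc (?p j) + r)"
      using j r sj by (simp add: nth_blocks wE_perms(2)[OF f d] del: upt_Suc)
    also have "\<dots> = concat E ! (?p j + r)" using le sj r by (simp add: winvE_def)
    also have "\<dots> = E ! j ! r" using nth_concat_ps j r by blast
    finally show "blocks (map length E) (wE n E) ! j ! r = E ! j ! r" .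
  qed
qed

lemma lin_wE:
  assumes f: "fam n (set E)" and d: "distinct E"
  shows "(lin n (set E) :: (nat \<Rightarrow> nat) \<Rightarrow> 'k::comm_ring_1) = alg_mult n (BI n (SetC (map length E))) (perm_elem (wE n E))"
proof -
  have "alg_mult n (BI n (SetC (map length E))) (perm_elem (wE n E)) = (lin n (set (blocks (map length E) (wE n E))) :: (nat \<Rightarrow> nat) \<Rightarrow> 'k)"
    by (rule BI_blocks[OF fam_list_comp[OF f d] wE_perms(1)[OF f d]])
  then show ?thesis by (simp add: blocks_wE[OF f d])
qed

lemma PM_iff:
  assumes f: "fam n (set E)" and d: "distinct E"
    and hm: "\<forall>c\<in>set E. hd c = Min (set c)"
    and sd: "sorted_wrt (\<lambda>c d. hd d < hd c) E"
    and q: "q < n"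
  shows "(\<forall>t<q. concat E ! q < concat E ! t) \<longleftrightarrow> (\<exists>j<length E. q = ps (map length E) j)"
proof -
  note F = fam_list_concat[OF f d]
  let ?L = "concat E" and ?p = "ps (map length E)"
  have pos: "\<forall>a\<in>set (map length E). a > 0" using fam_list_comp[OF f d] by (rule Comps_pos)
  have ne: "\<And>j. j < length E \<Longrightarrow> E ! j \<noteq> []" using f unfolding fam_def by auto
  have dc: "\<And>j. j < length E \<Longrightarrow> distinct (E ! j)" using f unfolding fam_def by auto
  have hd0: "\<And>j. j < length E \<Longrightarrow> ?L ! ?p j = hd (E ! j)"
  proof -
    fix j assume j: "j < length E"
    have "?L ! (?p j + 0) = E ! j ! 0" using nth_concat_ps[OF j] ne[OF j] by blast
    then show "?L ! ?p j = hd (E ! j)" using ne[OF j] by (simp add: hd_conv_nth)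
  qed
  have minle: "\<And>j r. j < length E \<Longrightarrow> r < length (E ! j) \<Longrightarrow> hd (E ! j) \<le> E ! j ! r"
  proof -
    fix j r assume j: "j < length E" and r: "r < length (E ! j)"
    have "hd (E ! j) = Min (set (E ! j))" using hm j by simp
    also have "\<dots> \<le> E ! j ! r" using r by (intro Min_le) auto
    finally show "hd (E ! j) \<le> E ! j ! r" .
  qed
  show ?thesis
  proof
    assume PM: "\<forall>t<q. ?L ! q < ?L ! t"
    have "q < length ?L" using q F(3) by simp
    then obtain j r where jr: "j < length E" "r < length (E ! j)" "q = ?p j + r"
      using concat_decomp by blast
    show "\<exists>j<length E. q = ?p j"
    proof (cases "r = 0")
      case True then show ?thesis using jr by auto
    next
      case False
      then have "?p j < q" using jr by simp
      then have lt: "?L ! q < ?L ! ?p j" using PM by blast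
      have "?L ! q = E ! j ! r" using nth_concat_ps[OF jr(1,2)] jr(3) by simp
      moreover have "E ! j ! r \<noteq> E ! j ! 0"
        using dc[OF jr(1)] jr(2) False ne[OF jr(1)] by (simp add: nth_eq_iff_index_eq)
      moreover have "?L ! ?p j = E ! j ! 0" using hd0[OF jr(1)] ne[OF jr(1)] by (simp add: hd_conv_nth)
      moreover have "E ! j ! 0 \<le> E ! j ! r" using minle[OF jr(1,2)] ne[OF jr(1)] by (simp add: hd_conv_nth)
      ultimately show ?thesis using lt by simp
    qed
  next
    assume "\<exists>j<length E. q = ?p j"
    then obtain j where j: "j < length E" "q = ?p j" by blast
    show "\<forall>t<q. ?L ! q < ?L ! t"
    proof (intro allI impI)
      fix t assume t: "t < q"
      then have "t < length ?L" using q F(3) by simp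
      then obtain j' r where jr: "j' < length E" "r < length (E ! j')" "t = ?p j' + r"
        using concat_decomp by blast
      have "?p j' < ?p j" using jr t j by simp
      then have jj: "j' < j" using ps_less_iff[OF pos, of j' j] jr j by simp
      have "?L ! q = hd (E ! j)" using hd0 j by simp
      also have "\<dots> < hd (E ! j')" using sorted_wrt_nth_less[OF sd jj] j by simp
      also have "\<dots> \<le> E ! j' ! r" using minle jr by simp
      also have "\<dots> = ?L ! t" using nth_concat_ps[OF jr(1,2)] jr(3) by simp
      finally show "?L ! q < ?L ! t" .
    qed
  qed
qed

lemma LRM_cond_iff:
  assumes f: "fam n (set E)" and d: "distinct E" and i: "i \<in> {1..n}"
  shows "(\<forall>k. 1 \<le> k \<and> k < inv (wE n E) i \<longrightarrow> wE n E k > i) \<longleftrightarrow>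
         (\<forall>t<i - 1. concat E ! (i - 1) < concat E ! t)"
proof -
  note F = fam_list_concat[OF f d]
  let ?L = "concat E" and ?w = "wE n E" and ?wi = "winvE n E"
  have p: "?wi permutes {1..n}" by (rule winvE_permutes[OF f d])
  have iw: "inv ?w = ?wi" by (rule wE_perms(2)[OF f d])
  have bwi: "bij ?wi" using permutes_bij[OF p] .
  have w_wi: "\<And>u. ?w (?wi u) = u" unfolding wE_def using bwi by (simp add: bij_is_inj inv_f_f)
  have wi_w: "\<And>k. ?wi (?w k) = k" unfolding wE_def using bwi by (simp add: bij_is_surj surj_f_inv_f)
  have wp: "?w permutes {1..n}" using wE_perms(1)[OF f d] unfolding perms_def by simp
  have wiL: "\<And>u. 1 \<le> u \<Longrightarrow> u \<le> n \<Longrightarrow> ?wi u = ?L ! (u - 1)" by (simp add: winvE_def)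
  have i1: "1 \<le> i" "i \<le> n" using i by auto
  have inL: "\<And>t. t < n \<Longrightarrow> ?L ! t \<in> {1..n}"
  proof -
    fix t assume "t < n"
    then have "t < length ?L" using F(3) by simp
    then have "?L ! t \<in> set ?L" by (rule nth_mem)
    then show "?L ! t \<in> {1..n}" using F(2) by blast
  qed
  show ?thesis
  proof
    assume H: "\<forall>k. 1 \<le> k \<and> k < inv ?w i \<longrightarrow> ?w k > i"
    show "\<forall>t<i - 1. ?L ! (i - 1) < ?L ! t"
    proof (intro allI impI)
      fix t assume t: "t < i - 1"
      show "?L ! (i - 1) < ?L ! t"
      proof (rule ccontr)
        assume "\<not> ?L ! (i - 1) < ?L ! t"
        moreover have "?L ! t \<noteq> ?L ! (i - 1)"
          using t i1 F(3) nth_eq_iff_index_eq[OF F(1), of t "i - 1"] by auto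
        ultimately have lt: "?L ! t < inv ?w i" using iw wiL[OF i1] by simp
        have k1: "1 \<le> ?L ! t" using inL[of t] t i1 by auto
        have "?wi (Suc t) = ?L ! t" using wiL[of "Suc t"] t i1 by simp
        then have "?w (?L ! t) = Suc t" using w_wi by metis
        moreover have "?w (?L ! t) > i" using H lt k1 by blast
        ultimately show False using t by simp
      qed
    qed
  next
    assume PM: "\<forall>t<i - 1. ?L ! (i - 1) < ?L ! t"
    show "\<forall>k. 1 \<le> k \<and> k < inv ?w i \<longrightarrow> ?w k > i"
    proof (intro allI impI)
      fix k assume k: "1 \<le> k \<and> k < inv ?w i"
      have wii: "inv ?w i = ?L ! (i - 1)" using iw wiL[OF i1] by simp
      have "?L ! (i - 1) \<le> n" using inL[of "i - 1"] i1 by auto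
      then have kn: "k \<in> {1..n}" using k wii by auto
      define u where "u = ?w k"
      have u: "u \<in> {1..n}" unfolding u_def using permutes_in_image[OF wp] kn by simp
      have ku: "k = ?L ! (u - 1)" using wi_w[of k] wiL[of u] u unfolding u_def by auto
      show "?w k > i"
      proof (rule ccontr)
        assume "\<not> ?w k > i"
        then have ui: "u \<le> i" unfolding u_def by simp
        have "u \<noteq> i" using k wii ku by auto
        then have "u - 1 < i - 1" using ui u by auto
        then have "?L ! (i - 1) < k" using PM ku by simp
        then show False using k wii by simp
      qed
    qed
  qed
qed

lemma LRM'_wE:
  assumes f: "fam n (set E)" and d: "distinct E"
    and hm: "\<forall>c\<in>set E. hd c = Min (set c)"
    and sd: "sorted_wrt (\<lambda>c d. hd d < hd c) E"
  shows "LRM' n (wE n E) = SetC (map length E)"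
proof -
  let ?L = "concat E" and ?p = "ps (map length E)"
  have pos: "\<forall>a\<in>set (map length E). a > 0" using fam_list_comp[OF f d] by (rule Comps_pos)
  have sn: "?p (length E) = n" using ps_sum[OF fam_list_comp[OF f d]] by simp
  have "LRM' n (wE n E) = {q. 1 \<le> q \<and> q < n \<and> (\<forall>t<q. ?L ! q < ?L ! t)}"
  proof
    show "LRM' n (wE n E) \<subseteq> {q. 1 \<le> q \<and> q < n \<and> (\<forall>t<q. ?L ! q < ?L ! t)}"
    proof
      fix q assume "q \<in> LRM' n (wE n E)"
      then obtain l where l: "q = l - 1" "l \<in> LRM n (wE n E)" "l > 1" unfolding LRM'_def by blast
      then have li: "l \<in> {1..n}" and c: "\<forall>k. 1 \<le> k \<and> k < inv (wE n E) l \<longrightarrow> wE n E k > l"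
        unfolding LRM_def by auto
      have "\<forall>t<l - 1. ?L ! (l - 1) < ?L ! t" using LRM_cond_iff[OF f d li] c by blast
      then show "q \<in> {q. 1 \<le> q \<and> q < n \<and> (\<forall>t<q. ?L ! q < ?L ! t)}" using l li by auto
    qed
  next
    show "{q. 1 \<le> q \<and> q < n \<and> (\<forall>t<q. ?L ! q < ?L ! t)} \<subseteq> LRM' n (wE n E)"
    proof
      fix q assume q: "q \<in> {q. 1 \<le> q \<and> q < n \<and> (\<forall>t<q. ?L ! q < ?L ! t)}"
      have li: "Suc q \<in> {1..n}" using q by auto
      have "\<forall>k. 1 \<le> k \<and> k < inv (wE n E) (Suc q) \<longrightarrow> wE n E k > Suc q"
        using LRM_cond_iff[OF f d li] q by simp
      then have "Suc q \<in> LRM n (wE n E)" unfolding LRM_def using li by blast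
      moreover have "Suc q > 1" using q by simp
      ultimately show "q \<in> LRM' n (wE n E)" unfolding LRM'_def by force
    qed
  qed
  also have "\<dots> = {q. 1 \<le> q \<and> q < n \<and> (\<exists>j<length E. q = ?p j)}"
    using PM_iff[OF f d hm sd] by blast
  also have "\<dots> = SetC (map length E)"
  proof
    show "{q. 1 \<le> q \<and> q < n \<and> (\<exists>j<length E. q = ?p j)} \<subseteq> SetC (map length E)"
    proof
      fix q assume "q \<in> {q. 1 \<le> q \<and> q < n \<and> (\<exists>j<length E. q = ?p j)}"
      then obtain j where j: "1 \<le> q" "j < length E" "q = ?p j" by blast
      then have "j \<noteq> 0" by (cases j) auto
      then show "q \<in> SetC (map length E)" unfolding SetC_ps using j by force
    qed
  next
    show "SetC (map length E) \<subseteq> {q. 1 \<le> q \<and> q < n \<and> (\<exists>j<length E. q = ?p j)}"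
    proof
      fix q assume "q \<in> SetC (map length E)"
      then obtain j where j: "1 \<le> j" "j < length E" "q = ?p j" unfolding SetC_ps by auto
      have "?p 0 < ?p j" using ps_strict[OF pos, of 0 j] j by simp
      moreover have "?p j < ?p (length E)" using ps_strict[OF pos, of j "length E"] j by simp
      ultimately show "q \<in> {q. 1 \<le> q \<and> q < n \<and> (\<exists>j<length E. q = ?p j)}" using j sn by auto
    qed
  qed
  finally show ?thesis .
qed

lemma shuffle_sorted_parts:
  "s \<in> shuffles a b \<Longrightarrow> sorted_wrt P s \<Longrightarrow> sorted_wrt P a \<and> sorted_wrt P b"
proof (induction s arbitrary: a b)
  case Nil then show ?case by simp
next
  case (Cons z zs)
  from Cons.prems(1) have
    "(a \<noteq> [] \<and> hd a = z \<and> zs \<in> shuffles (tl a) b) \<or> (b \<noteq> [] \<and> hd b = z \<and> zs \<in> shuffles a (tl b))"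
    by (simp add: Cons_in_shuffles_iff)
  then show ?case
  proof
    assume H: "a \<noteq> [] \<and> hd a = z \<and> zs \<in> shuffles (tl a) b"
    have s: "(\<forall>y\<in>set zs. P z y)" "sorted_wrt P zs" using Cons.prems(2) by auto
    have "sorted_wrt P (tl a) \<and> sorted_wrt P b" using Cons.IH[of "tl a" b] H s(2) by blast
    moreover have "set zs = set (tl a) \<union> set b" using set_shuffles H by blast
    moreover have "a = z # tl a" using H by (metis list.collapse)
    ultimately show ?thesis using s(1) by (metis Un_iff sorted_wrt.simps(2))
  next
    assume H: "b \<noteq> [] \<and> hd b = z \<and> zs \<in> shuffles a (tl b)"
    have s: "(\<forall>y\<in>set zs. P z y)" "sorted_wrt P zs" using Cons.prems(2) by auto
    have "sorted_wrt P a \<and> sorted_wrt P (tl b)" using Cons.IH[of a "tl b"] H s(2) by blast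
    moreover have "set zs = set a \<union> set (tl b)" using set_shuffles H by blast
    moreover have "b = z # tl b" using H by (metis list.collapse)
    ultimately show ?thesis using s(1) by (metis Un_iff sorted_wrt.simps(2))
  qed
qed

lemma shuffle_sorted_unique:
  assumes x: "inj x" and s: "s1 \<in> shuffles a b" "s2 \<in> shuffles a b"
    and so: "sorted_wrt (\<lambda>i j. x i < (x j::nat)) s1" "sorted_wrt (\<lambda>i j. x i < x j) s2"
  shows "s1 = s2"
proof -
  have "sorted_wrt (<) (map x s1)" "sorted_wrt (<) (map x s2)" using so by (simp_all add: sorted_wrt_map)
  moreover have "set (map x s2) = set (map x s1)" using set_shuffles[OF s(1)] set_shuffles[OF s(2)] by simp
  ultimately have "map x s2 = map x s1" by (rule strict_sorted_equal)
  then show ?thesis using x by (simp add: inj_map_eq_map)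
qed

lemma shuffle_sorted_exists:
  assumes x: "inj x"
  shows "set a \<inter> set b = {} \<Longrightarrow> sorted_wrt (\<lambda>i j. x i < (x j::nat)) a \<Longrightarrow> sorted_wrt (\<lambda>i j. x i < x j) b \<Longrightarrow>
    \<exists>s\<in>shuffles a b. sorted_wrt (\<lambda>i j. x i < x j) s"
proof (induction a b rule: shuffles.induct)
  case (1 ys) then show ?case by simp
next
  case (2 xs) then show ?case by simp
next
  case (3 p ps q qs)
  have pq: "p \<noteq> q" using "3.prems"(1) by auto
  then have "x p \<noteq> x q" using x by (simp add: inj_eq)
  then show ?case
  proof (cases "x p < x q")
    case True
    have "set ps \<inter> set (q # qs) = {}" using "3.prems"(1) by auto
    then obtain s where s: "s \<in> shuffles ps (q # qs)" "sorted_wrt (\<lambda>i j. x i < x j) s"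
      using "3.IH"(1) "3.prems" by auto
    have m: "p # s \<in> shuffles (p # ps) (q # qs)" using s(1) by (rule Cons_in_shuffles_leftI)
    have "\<forall>y\<in>set s. x p < x y"
    proof
      fix y assume "y \<in> set s"
      then have "y \<in> set ps \<or> y = q \<or> y \<in> set qs" using set_shuffles[OF s(1)] by auto
      then show "x p < x y" using "3.prems"(2,3) True by auto
    qed
    then have "sorted_wrt (\<lambda>i j. x i < x j) (p # s)" using s(2) by simp
    then show ?thesis using m by blast
  next
    case False
    then have lt: "x q < x p" using \<open>x p \<noteq> x q\<close> by simp
    have "set (p # ps) \<inter> set qs = {}" using "3.prems"(1) by auto
    then obtain s where s: "s \<in> shuffles (p # ps) qs" "sorted_wrt (\<lambda>i j. x i < x j) s"
      using "3.IH"(2) "3.prems" by auto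
    have m: "q # s \<in> shuffles (p # ps) (q # qs)" using s(1) by (rule Cons_in_shuffles_rightI)
    have "\<forall>y\<in>set s. x q < x y"
    proof
      fix y assume "y \<in> set s"
      then have "y \<in> set qs \<or> y = p \<or> y \<in> set ps" using set_shuffles[OF s(1)] by auto
      then show "x q < x y" using "3.prems"(2,3) lt by auto
    qed
    then have "sorted_wrt (\<lambda>i j. x i < x j) (q # s)" using s(2) by simp
    then show ?thesis using m by blast
  qed
qed

lemma lin_shuffle:
  assumes disj: "set a \<inter> set b = {}"
  shows "(lin n (insert a (insert b \<Psi>)) :: (nat \<Rightarrow> nat) \<Rightarrow> 'k::comm_ring_1) =
         (\<lambda>x. \<Sum>s\<in>shuffles a b. lin n (insert s \<Psi>) x)"
proof
  fix x :: "nat \<Rightarrow> nat"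
  let ?P = "\<lambda>c. sorted_wrt (\<lambda>i j. x i < x j) c"
  show "(lin n (insert a (insert b \<Psi>)) :: (nat \<Rightarrow> nat) \<Rightarrow> 'k) x = (\<Sum>s\<in>shuffles a b. lin n (insert s \<Psi>) x)"
  proof (cases "x \<in> perms n \<and> (\<forall>c\<in>\<Psi>. ?P c)")
    case False
    have z: "\<And>s. (lin n (insert s \<Psi>) x :: 'k) = 0" unfolding lin_def using False by auto
    have "(lin n (insert a (insert b \<Psi>)) x :: 'k) = 0" unfolding lin_def using False by auto
    then show ?thesis using z by simp
  next
    case True
    then have xi: "inj x" using perms_inj by blast
    show ?thesis
    proof (cases "?P a \<and> ?P b")
      case True2: True
      then obtain s0 where s0: "s0 \<in> shuffles a b" "?P s0"
        using shuffle_sorted_exists[OF xi disj] by blast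
      have eq: "\<And>s. s \<in> shuffles a b \<Longrightarrow> (lin n (insert s \<Psi>) x :: 'k) = (if s = s0 then 1 else 0)"
      proof -
        fix s assume s: "s \<in> shuffles a b"
        have "?P s \<longleftrightarrow> s = s0" using shuffle_sorted_unique[OF xi s s0(1) _ s0(2)] s0(2) by blast
        then show "(lin n (insert s \<Psi>) x :: 'k) = (if s = s0 then 1 else 0)"
          unfolding lin_def using True by auto
      qed
      have "(\<Sum>s\<in>shuffles a b. (lin n (insert s \<Psi>) x :: 'k)) = (\<Sum>s\<in>shuffles a b. if s = s0 then 1 else 0)"
        by (rule sum.cong[OF refl]) (rule eq)
      also have "\<dots> = 1" using s0(1) by (simp add: sum.delta)
      finally show ?thesis unfolding lin_def using True True2 by simp
    next
      case False2: False
      have "\<And>s. s \<in> shuffles a b \<Longrightarrow> (lin n (insert s \<Psi>) x :: 'k) = 0"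
      proof -
        fix s assume "s \<in> shuffles a b"
        then have "\<not> ?P s" using shuffle_sorted_parts False2 by blast
        then show "(lin n (insert s \<Psi>) x :: 'k) = 0" unfolding lin_def by auto
      qed
      then have "(\<Sum>s\<in>shuffles a b. (lin n (insert s \<Psi>) x :: 'k)) = 0" by simp
      moreover have "(lin n (insert a (insert b \<Psi>)) x :: 'k) = 0" unfolding lin_def using False2 by auto
      ultimately show ?thesis by simp
    qed
  qed
qed

lemma append_in_shuffles: "a @ b \<in> shuffles a b"
  by (induction a) (auto intro: Cons_in_shuffles_leftI)

lemma sizes_remove:
  assumes "finite \<Phi>" "c \<in> \<Phi>"
  shows "sizes \<Phi> = add_mset (length c) (sizes (\<Phi> - {c}))"
  unfolding sizes_def using mset_set.remove[OF assms] by simp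

lemma sizes_insert:
  assumes "finite \<Phi>" "c \<notin> \<Phi>"
  shows "sizes (insert c \<Phi>) = add_mset (length c) (sizes \<Phi>)"
  unfolding sizes_def using mset_set.insert[OF assms] by simp

lemma fam_replace:
  assumes f: "fam n (insert c1 (insert c2 \<Psi>))" and c1: "c1 \<notin> insert c2 \<Psi>" and c2: "c2 \<notin> \<Psi>"
    and s: "set s = set c1 \<union> set c2" "distinct s"
  shows "fam n (insert s \<Psi>)" "s \<notin> \<Psi>"
proof -
  have fin: "finite \<Psi>" using f unfolding fam_def by simp
  have ne1: "c1 \<noteq> []" using f unfolding fam_def by simp
  have dj: "\<And>d. d \<in> \<Psi> \<Longrightarrow> set d \<inter> set c1 = {} \<and> set d \<inter> set c2 = {}"
    using f c1 c2 unfolding fam_def by (metis insert_iff)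
  show "s \<notin> \<Psi>"
  proof
    assume "s \<in> \<Psi>"
    then have "set s \<inter> set c1 = {}" using dj by blast
    then show False using s(1) ne1 by auto
  qed
  show "fam n (insert s \<Psi>)"
    unfolding fam_def
  proof (intro conjI ballI impI)
    show "finite (insert s \<Psi>)" using fin by simp
  next
    fix c assume "c \<in> insert s \<Psi>"
    then show "c \<noteq> []" "distinct c" using f s ne1 unfolding fam_def by auto
  next
    fix c d assume cd: "c \<in> insert s \<Psi>" "d \<in> insert s \<Psi>" "c \<noteq> d"
    show "set c \<inter> set d = {}"
    proof (cases "c = s")
      case True
      then have "d \<in> \<Psi>" using cd by auto
      then show ?thesis using dj True s(1) by blast
    next
      case False
      then have c\<Psi>: "c \<in> \<Psi>" using cd by auto
      show ?thesis
      proof (cases "d = s")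
        case True then show ?thesis using dj c\<Psi> s(1) by blast
      next
        case False
        then have "d \<in> \<Psi>" using cd by auto
        then show ?thesis using f c\<Psi> cd(3) unfolding fam_def by blast
      qed
    qed
  next
    show "\<Union>(set ` insert s \<Psi>) = {1..n}" using f s(1) unfolding fam_def by auto
  qed
qed

lemma fam_split:
  assumes f: "fam n (insert c \<Psi>)" and c: "c \<notin> \<Psi>" and cab: "c = A @ B" and ne: "A \<noteq> []" "B \<noteq> []"
  shows "fam n (insert A (insert B \<Psi>))" "A \<notin> insert B \<Psi>" "B \<notin> \<Psi>" "set A \<inter> set B = {}"
proof -
  have fin: "finite \<Psi>" using f unfolding fam_def by simp
  have dc: "distinct c" using f unfolding fam_def by simp
  then show dAB: "set A \<inter> set B = {}" using cab by simp
  have dj: "\<And>d. d \<in> \<Psi> \<Longrightarrow> set d \<inter> set c = {}"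
    using f c unfolding fam_def by (metis insert_iff)
  show "B \<notin> \<Psi>"
  proof
    assume "B \<in> \<Psi>"
    then have "set B \<inter> set c = {}" using dj by blast
    then show False using cab ne by auto
  qed
  show "A \<notin> insert B \<Psi>"
  proof
    assume "A \<in> insert B \<Psi>"
    then show False
    proof
      assume "A = B" then show False using dAB ne by auto
    next
      assume "A \<in> \<Psi>"
      then have "set A \<inter> set c = {}" using dj by blast
      then show False using cab ne by auto
    qed
  qed
  show "fam n (insert A (insert B \<Psi>))"
    unfolding fam_def
  proof (intro conjI ballI impI)
    show "finite (insert A (insert B \<Psi>))" using fin by simp
  next
    fix d assume "d \<in> insert A (insert B \<Psi>)"
    then show "d \<noteq> []" "distinct d" using f ne dc cab unfolding fam_def by auto
  next
    fix d e assume de: "d \<in> insert A (insert B \<Psi>)" "e \<in> insert A (insert B \<Psi>)" "d \<noteq> e"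
    have AB: "\<And>d. d \<in> \<Psi> \<Longrightarrow> set d \<inter> set A = {} \<and> set d \<inter> set B = {}" using dj cab by auto
    show "set d \<inter> set e = {}"
      using de AB dAB f unfolding fam_def by (auto; blast)
  next
    show "\<Union>(set ` insert A (insert B \<Psi>)) = {1..n}" using f cab unfolding fam_def by auto
  qed
qed

definition mstep :: "nat multiset \<Rightarrow> nat multiset \<Rightarrow> bool" where
  "mstep M N \<longleftrightarrow> (\<exists>L a b. M = add_mset a (add_mset b L) \<and> N = add_mset (a + b) L)"

abbreviation mle :: "nat multiset \<Rightarrow> nat multiset \<Rightarrow> bool" where
  "mle \<equiv> mstep\<^sup>*\<^sup>*"

lemma fam_finite: "fam n \<Phi> \<Longrightarrow> finite \<Phi>" by (simp add: fam_def)

lemma in_sizes: "finite \<Phi> \<Longrightarrow> a \<in># sizes \<Phi> \<Longrightarrow> \<exists>c\<in>\<Phi>. length c = a"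
  unfolding sizes_def by auto

lemma merge_lemma:
  assumes "mle M N"
  shows "\<forall>\<Phi>. fam n \<Phi> \<longrightarrow> sizes \<Phi> = M \<longrightarrow>
    (lin n \<Phi> :: (nat \<Rightarrow> nat) \<Rightarrow> 'k::comm_ring_1) \<in> spanned {lin n \<Psi> | \<Psi>. fam n \<Psi> \<and> sizes \<Psi> = N}"
  using assms
proof (induction rule: converse_rtranclp_induct)
  case base
  then show ?case by (auto intro: sp_gen)
next
  case (step M M')
  show ?case
  proof (intro allI impI)
    fix \<Phi> assume f: "fam n \<Phi>" and sz: "sizes \<Phi> = M"
    have fin: "finite \<Phi>" using f by (rule fam_finite)
    obtain L a b where M: "M = add_mset a (add_mset b L)" and M': "M' = add_mset (a + b) L"
      using step.hyps(1) unfolding mstep_def by blast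
    obtain c1 where c1: "c1 \<in> \<Phi>" "length c1 = a" using in_sizes[OF fin] sz M by auto
    have s1: "sizes (\<Phi> - {c1}) = add_mset b L" using sizes_remove[OF fin c1(1)] sz M c1(2) by simp
    obtain c2 where c2: "c2 \<in> \<Phi> - {c1}" "length c2 = b" using in_sizes[of "\<Phi> - {c1}" b] fin s1 by auto
    define \<Psi>0 where "\<Psi>0 = \<Phi> - {c1} - {c2}"
    have s2: "sizes \<Psi>0 = L" using sizes_remove[of "\<Phi> - {c1}" c2] fin c2 s1 unfolding \<Psi>0_def by simp
    have \<Phi>eq: "\<Phi> = insert c1 (insert c2 \<Psi>0)" using c1 c2 unfolding \<Psi>0_def by auto
    have c1n: "c1 \<notin> insert c2 \<Psi>0" using c2 unfolding \<Psi>0_def by auto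
    have c2n: "c2 \<notin> \<Psi>0" unfolding \<Psi>0_def by auto
    have dj: "set c1 \<inter> set c2 = {}" using f c1 c2 unfolding fam_def by auto
    have dd: "distinct c1" "distinct c2" using f c1 c2 unfolding fam_def by auto
    have fin0: "finite \<Psi>0" using fin unfolding \<Psi>0_def by simp
    have lin_eq: "(lin n \<Phi> :: (nat \<Rightarrow> nat) \<Rightarrow> 'k) = (\<lambda>x. \<Sum>s\<in>shuffles c1 c2. lin n (insert s \<Psi>0) x)"
      unfolding \<Phi>eq by (rule lin_shuffle[OF dj])
    have "\<And>s. s \<in> shuffles c1 c2 \<Longrightarrow> (lin n (insert s \<Psi>0) :: (nat \<Rightarrow> nat) \<Rightarrow> 'k) \<in> spanned {lin n \<Psi> | \<Psi>. fam n \<Psi> \<and> sizes \<Psi> = N}"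
    proof -
      fix s assume s: "s \<in> shuffles c1 c2"
      have ss: "set s = set c1 \<union> set c2" using set_shuffles[OF s] .
      have ds: "distinct s" using distinct_disjoint_shuffles[OF dd dj s] .
      have fs: "fam n (insert s \<Psi>0)" "s \<notin> \<Psi>0"
        using fam_replace[OF f[unfolded \<Phi>eq] c1n c2n ss ds] by auto
      have "sizes (insert s \<Psi>0) = M'"
        using sizes_insert[OF fin0 fs(2)] s2 M' length_shuffles[OF s] c1 c2 by simp
      then show "(lin n (insert s \<Psi>0) :: (nat \<Rightarrow> nat) \<Rightarrow> 'k) \<in> spanned {lin n \<Psi> | \<Psi>. fam n \<Psi> \<and> sizes \<Psi> = N}"
        using step.IH fs(1) by blast
    qed
    then have "(\<lambda>x. \<Sum>s\<in>shuffles c1 c2. (lin n (insert s \<Psi>0) :: (nat \<Rightarrow> nat) \<Rightarrow> 'k) x) \<in> spanned {lin n \<Psi> | \<Psi>. fam n \<Psi> \<and> sizes \<Psi> = N}"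
      by (intro sp_sum) auto
    then show "(lin n \<Phi> :: (nat \<Rightarrow> nat) \<Rightarrow> 'k) \<in> spanned {lin n \<Psi> | \<Psi>. fam n \<Psi> \<and> sizes \<Psi> = N}"
      using lin_eq by simp
  qed
qed

definition idxm :: "nat list \<Rightarrow> nat" where
  "idxm c = length (takeWhile (\<lambda>y. y \<noteq> Min (set c)) c)"

definition fw :: "nat list \<Rightarrow> nat" where
  "fw c = length c * length c + idxm c"

definition mu :: "nat list set \<Rightarrow> nat" where
  "mu \<Phi> = (\<Sum>c\<in>\<Phi>. fw c)"

lemma shuffle_idx:
  assumes m: "m \<notin> set A" and B: "B \<noteq> []" "hd B = m"
  shows "s \<in> shuffles A B \<Longrightarrow> length (takeWhile (\<lambda>y. y \<noteq> m) s) \<le> length A \<and>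
    (length (takeWhile (\<lambda>y. y \<noteq> m) s) = length A \<longrightarrow> s = A @ B)"
  using m
proof (induction A arbitrary: s)
  case Nil
  then have "s = B" by simp
  moreover have "takeWhile (\<lambda>y. y \<noteq> m) B = []" using B by (cases B) auto
  ultimately show ?case by simp
next
  case (Cons p A')
  have "s \<noteq> []" using Cons.prems(1) B by auto
  then obtain z zs where s: "s = z # zs" by (cases s) auto
  from Cons.prems(1) s have
    "(z = p \<and> zs \<in> shuffles A' B) \<or> (hd B = z \<and> zs \<in> shuffles (p # A') (tl B))"
    using B(1) by (auto simp: Cons_in_shuffles_iff)
  then show ?case
  proof
    assume H: "z = p \<and> zs \<in> shuffles A' B"
    have pm: "p \<noteq> m" using Cons.prems(2) by auto
    have IH: "length (takeWhile (\<lambda>y. y \<noteq> m) zs) \<le> length A' \<and>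
      (length (takeWhile (\<lambda>y. y \<noteq> m) zs) = length A' \<longrightarrow> zs = A' @ B)"
      using Cons.IH[of zs] H Cons.prems(2) by simp
    show ?thesis using IH H pm s by simp
  next
    assume H: "hd B = z \<and> zs \<in> shuffles (p # A') (tl B)"
    then have "z = m" using B by simp
    then have "takeWhile (\<lambda>y. y \<noteq> m) s = []" using s by simp
    moreover have "s \<noteq> (p # A') @ B" using s \<open>z = m\<close> Cons.prems(2) by auto
    ultimately show ?thesis by simp
  qed
qed

definition NG :: "nat \<Rightarrow> nat multiset \<Rightarrow> ((nat \<Rightarrow> nat) \<Rightarrow> 'k::comm_ring_1) set" where
  "NG n M = {lin n \<Psi> | \<Psi>. fam n \<Psi> \<and> (\<forall>c\<in>\<Psi>. hd c = Min (set c)) \<and> mle (sizes \<Psi>) M}"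

lemma straighten:
  "fam n \<Phi> \<Longrightarrow> mle (sizes \<Phi>) M \<Longrightarrow> (lin n \<Phi> :: (nat \<Rightarrow> nat) \<Rightarrow> 'k::comm_ring_1) \<in> spanned (NG n M)"
proof (induction "mu \<Phi>" arbitrary: \<Phi> rule: less_induct)
  case less
  note f = less.prems(1) and le = less.prems(2)
  show ?case
  proof (cases "\<forall>c\<in>\<Phi>. hd c = Min (set c)")
    case True
    then show ?thesis using f le unfolding NG_def by (auto intro: sp_gen)
  next
    case False
    then obtain c where c: "c \<in> \<Phi>" "hd c \<noteq> Min (set c)" by blast
    have fin: "finite \<Phi>" using f by (rule fam_finite)
    have cne: "c \<noteq> []" and dc: "distinct c" using f c unfolding fam_def by auto
    define m where "m = Min (set c)"
    have mc: "m \<in> set c" unfolding m_def using cne by simp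
    define A where "A = takeWhile (\<lambda>y. y \<noteq> m) c"
    define B where "B = dropWhile (\<lambda>y. y \<noteq> m) c"
    have cAB: "c = A @ B" unfolding A_def B_def by simp
    have Bne: "B \<noteq> []" unfolding B_def using mc by simp
    have hB: "hd B = m" unfolding B_def using hd_dropWhile[of "\<lambda>y. y \<noteq> m" c] Bne B_def by simp
    have Ane: "A \<noteq> []"
    proof
      assume "A = []"
      then have "c = B" using cAB by simp
      then show False using hB c(2) m_def by simp
    qed
    have mA: "m \<notin> set A" unfolding A_def using set_takeWhileD by fastforce
    define \<Psi>0 where "\<Psi>0 = \<Phi> - {c}"
    have fin0: "finite \<Psi>0" using fin unfolding \<Psi>0_def by simp
    have \<Phi>eq: "\<Phi> = insert c \<Psi>0" and cn: "c \<notin> \<Psi>0" using c unfolding \<Psi>0_def by auto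
    note sp = fam_split[OF f[unfolded \<Phi>eq] cn cAB Ane Bne]
    define \<Phi>' where "\<Phi>' = insert A (insert B \<Psi>0)"
    have szc: "sizes \<Phi> = add_mset (length A + length B) (sizes \<Psi>0)"
      using sizes_insert[OF fin0 cn] \<Phi>eq cAB by simp
    have szp: "sizes \<Phi>' = add_mset (length A) (add_mset (length B) (sizes \<Psi>0))"
      unfolding \<Phi>'_def using sizes_insert[OF _ sp(2)] sizes_insert[OF fin0 sp(3)] fin0 by simp
    have "mstep (sizes \<Phi>') (sizes \<Phi>)" unfolding mstep_def szc szp by blast
    then have le': "mle (sizes \<Phi>') M" using le by (rule converse_rtranclp_into_rtranclp)
    have minB: "Min (set B) = m"
    proof -
      have "set B \<subseteq> set c" using cAB by auto
      moreover have "m \<in> set B" using Bne hB by (metis list.set_sel(1))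
      moreover have "\<And>y. y \<in> set B \<Longrightarrow> m \<le> y" using calculation(1) unfolding m_def by (auto intro: Min_le)
      ultimately show ?thesis by (intro Min_eqI) auto
    qed
    have idxB: "idxm B = 0" unfolding idxm_def minB using Bne hB by (cases B) auto
    have idxA: "idxm A \<le> length A" unfolding idxm_def by (rule length_takeWhile_le)
    have idxc: "idxm c = length A" unfolding idxm_def A_def m_def by simp
    have lA: "length A > 0" and lB: "length B > 0" using Ane Bne by auto
    have fwlt: "fw A + fw B < fw c"
    proof -
      have "length c = length A + length B" using cAB by simp
      then have "fw c = (length A + length B) * (length A + length B) + length A" unfolding fw_def idxc by simp
      moreover have "fw A + fw B \<le> length A * length A + length A + length B * length B"
        unfolding fw_def using idxA idxB by simp
      moreover have "length A * length B > 0" using lA lB by simp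
      ultimately show ?thesis by (simp only: algebra_simps)
    qed
    have mu\<Phi>: "mu \<Phi> = fw c + mu \<Psi>0" unfolding mu_def \<Phi>eq using fin0 cn by simp
    have mu\<Phi>': "mu \<Phi>' = fw A + (fw B + mu \<Psi>0)" unfolding mu_def \<Phi>'_def using fin0 sp(2,3) by simp
    have IH1: "(lin n \<Phi>' :: (nat \<Rightarrow> nat) \<Rightarrow> 'k) \<in> spanned (NG n M)"
      using less.hyps[of \<Phi>'] sp(1) le' mu\<Phi> mu\<Phi>' fwlt unfolding \<Phi>'_def by simp
    have lin_eq: "(lin n \<Phi>' :: (nat \<Rightarrow> nat) \<Rightarrow> 'k) = (\<lambda>x. \<Sum>s\<in>shuffles A B. lin n (insert s \<Psi>0) x)"
      unfolding \<Phi>'_def by (rule lin_shuffle[OF sp(4)])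
    have cin: "c \<in> shuffles A B" using cAB append_in_shuffles by simp
    have others: "\<And>s. s \<in> shuffles A B - {c} \<Longrightarrow> (lin n (insert s \<Psi>0) :: (nat \<Rightarrow> nat) \<Rightarrow> 'k) \<in> spanned (NG n M)"
    proof -
      fix s assume s: "s \<in> shuffles A B - {c}"
      then have s1: "s \<in> shuffles A B" and sc: "s \<noteq> c" by auto
      have ss: "set s = set A \<union> set B" using set_shuffles[OF s1] .
      have dAB: "distinct A" "distinct B" using dc cAB by auto
      have ds: "distinct s" using distinct_disjoint_shuffles[OF dAB sp(4) s1] .
      have fs: "fam n (insert s \<Psi>0)" "s \<notin> \<Psi>0"
        using fam_replace[OF sp(1) sp(2) sp(3) ss ds] by auto
      have ls: "length s = length c" using length_shuffles[OF s1] cAB by simp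
      have "sizes (insert s \<Psi>0) = sizes \<Phi>" using sizes_insert[OF fin0 fs(2)] ls szc cAB by simp
      then have le'': "mle (sizes (insert s \<Psi>0)) M" using le by simp
      have "Min (set s) = m" using ss cAB m_def by simp
      then have "idxm s = length (takeWhile (\<lambda>y. y \<noteq> m) s)" unfolding idxm_def by simp
      then have "idxm s < length A" using shuffle_idx[OF mA Bne hB s1] sc cAB by fastforce
      then have "fw s < fw c" unfolding fw_def using ls idxc by simp
      moreover have "mu (insert s \<Psi>0) = fw s + mu \<Psi>0" unfolding mu_def using fin0 fs(2) by simp
      ultimately have "mu (insert s \<Psi>0) < mu \<Phi>" using mu\<Phi> by simp
      then show "(lin n (insert s \<Psi>0) :: (nat \<Rightarrow> nat) \<Rightarrow> 'k) \<in> spanned (NG n M)"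
        using less.hyps fs(1) le'' by blast
    qed
    have sum_in: "(\<lambda>x. \<Sum>s\<in>shuffles A B - {c}. (lin n (insert s \<Psi>0) :: (nat \<Rightarrow> nat) \<Rightarrow> 'k) x) \<in> spanned (NG n M)"
      by (intro sp_sum) (auto intro: others)
    have "(lin n \<Phi> :: (nat \<Rightarrow> nat) \<Rightarrow> 'k) = (\<lambda>x. lin n \<Phi>' x - (\<Sum>s\<in>shuffles A B - {c}. (lin n (insert s \<Psi>0) :: (nat \<Rightarrow> nat) \<Rightarrow> 'k) x))"
    proof
      fix x
      have "(lin n \<Phi>' :: (nat \<Rightarrow> nat) \<Rightarrow> 'k) x = lin n (insert c \<Psi>0) x + (\<Sum>s\<in>shuffles A B - {c}. lin n (insert s \<Psi>0) x)"
        unfolding lin_eq using sum.remove[OF finite_shuffles cin] by simp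
      then show "(lin n \<Phi> :: (nat \<Rightarrow> nat) \<Rightarrow> 'k) x = lin n \<Phi>' x - (\<Sum>s\<in>shuffles A B - {c}. (lin n (insert s \<Psi>0) :: (nat \<Rightarrow> nat) \<Rightarrow> 'k) x)"
        using \<Phi>eq by simp
    qed
    then show ?thesis using sp_diff[OF IH1 sum_in] by simp
  qed
qed

lemma PL_mset:
  assumes "mset xs = mset ys"
  shows "part_le xs ys"
proof -
  obtain p where p: "p permutes {..<length ys}" "permute_list p ys = xs"
    using mset_eq_permutation[OF assms] by blast
  have len: "length xs = length ys" using p(2) by auto
  have nth: "\<And>i. i < length ys \<Longrightarrow> xs ! i = ys ! p i" using p permute_list_nth by metis
  show ?thesis
    unfolding part_le_def
  proof (intro exI[of _ p] conjI allI impI)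
    fix i assume "i < length xs"
    then show "p i < length ys" using len permutes_in_image[OF p(1)] by simp
  next
    fix j assume j: "j < length ys"
    have ij: "inv p j < length ys" using permutes_in_image[OF permutes_inv[OF p(1)]] j by simp
    have "{i. i < length xs \<and> p i = j} = {inv p j}"
    proof
      show "{i. i < length xs \<and> p i = j} \<subseteq> {inv p j}"
        using permutes_inverses(2)[OF p(1)] by auto
      show "{inv p j} \<subseteq> {i. i < length xs \<and> p i = j}"
        using permutes_inverses(1)[OF p(1)] ij len by auto
    qed
    then have "(\<Sum>i\<in>{i. i < length xs \<and> p i = j}. xs ! i) = xs ! inv p j" by simp
    also have "\<dots> = ys ! j" using nth[OF ij] permutes_inverses(1)[OF p(1)] by simp
    finally show "ys ! j = (\<Sum>i\<in>{i. i < length xs \<and> p i = j}. xs ! i)" by simp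
  qed
qed

lemma PL_comp:
  assumes ab: "part_le a b" and bc: "part_le b c"
  shows "part_le a c"
proof -
  obtain f where f: "\<forall>i<length a. f i < length b"
    "\<forall>j<length b. b ! j = (\<Sum>i\<in>{i. i < length a \<and> f i = j}. a ! i)"
    using ab unfolding part_le_def by blast
  obtain g where g: "\<forall>i<length b. g i < length c"
    "\<forall>j<length c. c ! j = (\<Sum>i\<in>{i. i < length b \<and> g i = j}. b ! i)"
    using bc unfolding part_le_def by blast
  show ?thesis
    unfolding part_le_def
  proof (intro exI[of _ "g \<circ> f"] conjI allI impI)
    fix i assume "i < length a" then show "(g \<circ> f) i < length c" using f g by simp
  next
    fix k assume k: "k < length c"
    let ?S = "{i. i < length a \<and> (g \<circ> f) i = k}" and ?T = "{j. j < length b \<and> g j = k}"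
    have "(\<Sum>j\<in>?T. sum ((!) a) {i. i \<in> ?S \<and> f i = j}) = sum ((!) a) ?S"
      by (rule sum.group) (use f in auto)
    moreover have "\<And>j. j \<in> ?T \<Longrightarrow> {i. i \<in> ?S \<and> f i = j} = {i. i < length a \<and> f i = j}" by auto
    ultimately have "sum ((!) a) ?S = (\<Sum>j\<in>?T. sum ((!) a) {i. i < length a \<and> f i = j})" by simp
    also have "\<dots> = (\<Sum>j\<in>?T. b ! j)" using f by simp
    also have "\<dots> = c ! k" using g k by simp
    finally show "c ! k = (\<Sum>i\<in>?S. a ! i)" by simp
  qed
qed

lemma PL_step: "part_le (a # b # L) ((a + b) # L)"
  unfolding part_le_def
proof (intro exI[of _ "\<lambda>i. if i < 2 then 0 else i - 1"] conjI allI impI)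
  fix i assume "i < length (a # b # L)"
  then show "(if i < 2 then 0 else i - 1) < length ((a + b) # L)" by auto
next
  fix j assume j: "j < length ((a + b) # L)"
  show "((a + b) # L) ! j = (\<Sum>i\<in>{i. i < length (a # b # L) \<and> (if i < 2 then 0 else i - 1) = j}. (a # b # L) ! i)"
  proof (cases j)
    case 0
    then have "{i. i < length (a # b # L) \<and> (if i < 2 then 0 else i - 1) = j} = {0, 1}" by auto
    then show ?thesis using 0 by simp
  next
    case (Suc j')
    then have "{i. i < length (a # b # L) \<and> (if i < 2 then 0 else i - 1) = j} = {Suc (Suc j')}"
      using j by auto
    then show ?thesis using Suc by simp
  qed
qed

lemma mle_part_le:
  assumes "mle M N"
  shows "mset lam = M \<Longrightarrow> mset ms = N \<Longrightarrow> part_le lam ms"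
  using assms
proof (induction arbitrary: ms rule: rtranclp_induct)
  case base
  then show ?case by (intro PL_mset) simp
next
  case (step y z)
  obtain K a b where y: "y = add_mset a (add_mset b K)" and z: "z = add_mset (a + b) K"
    using step.hyps(2) unfolding mstep_def by blast
  obtain kl where kl: "mset kl = K" using ex_mset by blast
  have "part_le lam (a # b # kl)" using step.IH[of "a # b # kl"] step.prems(1) y kl by simp
  moreover have "part_le (a # b # kl) ((a + b) # kl)" by (rule PL_step)
  moreover have "part_le ((a + b) # kl) ms" using step.prems(2) z kl by (intro PL_mset) simp
  ultimately show ?case using PL_comp by blast
qed

lemma mle_add: "mle A B \<Longrightarrow> mle (A + C) (B + C)"
proof (induction rule: rtranclp_induct)
  case base then show ?case by (rule rtranclp.rtrancl_refl)
next
  case (step y z)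
  obtain L a b where y: "y = add_mset a (add_mset b L)" and z: "z = add_mset (a + b) L"
    using step.hyps(2) unfolding mstep_def by blast
  have "mstep (y + C) (z + C)"
    unfolding mstep_def y z by (rule exI[of _ "L + C"], rule exI[of _ a], rule exI[of _ b]) simp
  then show ?case by (rule rtranclp.rtrancl_into_rtrancl[OF step.IH])
qed

lemma mle_sum:
  assumes "finite J"
  shows "(\<forall>j\<in>J. mle (A j) (B j)) \<Longrightarrow> mle (\<Sum>j\<in>J. A j) (\<Sum>j\<in>J. B j)"
  using assms
proof (induction J rule: finite_induct)
  case empty then show ?case by simp
next
  case (insert x F)
  have 1: "mle (A x + (\<Sum>j\<in>F. A j)) (B x + (\<Sum>j\<in>F. A j))" using insert.prems mle_add by blast
  have "mle ((\<Sum>j\<in>F. A j) + B x) ((\<Sum>j\<in>F. B j) + B x)" using insert mle_add by blast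
  then have 2: "mle (B x + (\<Sum>j\<in>F. A j)) (B x + (\<Sum>j\<in>F. B j))" by (simp add: add.commute)
  show ?case using rtranclp_trans[OF 1 2] insert.hyps by simp
qed

lemma mle_single: "G \<noteq> {#} \<Longrightarrow> mle G {#sum_mset G#}"
proof (induction G)
  case empty then show ?case by simp
next
  case (add x G)
  show ?case
  proof (cases "G = {#}")
    case True then show ?thesis by simp
  next
    case False
    then have "mle G {#sum_mset G#}" using add.IH by simp
    then have "mle (G + {#x#}) ({#sum_mset G#} + {#x#})" by (rule mle_add)
    moreover have "mstep ({#sum_mset G#} + {#x#}) {#sum_mset (add_mset x G)#}"
      unfolding mstep_def by (rule exI[of _ "{#}"], rule exI[of _ x], rule exI[of _ "sum_mset G"]) simp
    ultimately show ?thesis by (simp add: rtranclp.rtrancl_into_rtrancl)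
  qed
qed

lemma mset_filter_sum:
  "(\<forall>i\<in>set xs. f i < (m::nat)) \<Longrightarrow> mset xs = (\<Sum>j<m. mset (filter (\<lambda>i. f i = j) xs))"
proof (induction xs)
  case Nil then show ?case by simp
next
  case (Cons x xs)
  have "(\<Sum>j<m. mset (filter (\<lambda>i. f i = j) (x # xs))) =
        (\<Sum>j<m. mset (filter (\<lambda>i. f i = j) xs) + (if f x = j then {#x#} else 0))"
    by (rule sum.cong) auto
  also have "\<dots> = (\<Sum>j<m. mset (filter (\<lambda>i. f i = j) xs)) + (\<Sum>j<m. (if f x = j then {#x#} else 0))"
    by (rule sum.distrib)
  also have "(\<Sum>j<m. (if f x = j then {#x#} else 0)) = {#x#}"
    using Cons.prems by (subst sum.delta') auto
  finally show ?case using Cons by simp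
qed

lemma image_mset_sum: "finite J \<Longrightarrow> image_mset g (\<Sum>j\<in>J. M j) = (\<Sum>j\<in>J. image_mset g (M j))"
  by (induction J rule: finite_induct) auto

lemma part_le_mle:
  assumes pl: "part_le lam ms" and pos: "\<forall>a\<in>set ms. a > 0"
  shows "mle (mset lam) (mset ms)"
proof -
  obtain f where f: "\<forall>i<length lam. f i < length ms"
    "\<forall>j<length ms. ms ! j = (\<Sum>i\<in>{i. i < length lam \<and> f i = j}. lam ! i)"
    using pl unfolding part_le_def by blast
  let ?l = "length lam" and ?m = "length ms"
  define G where "G j = image_mset ((!) lam) (mset (filter (\<lambda>i. f i = j) [0..<?l]))" for j
  have "mset lam = image_mset ((!) lam) (mset [0..<?l])"
    by (metis map_nth mset_map)
  also have "mset [0..<?l] = (\<Sum>j<?m. mset (filter (\<lambda>i. f i = j) [0..<?l]))"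
    using f(1) by (intro mset_filter_sum) auto
  finally have ml: "mset lam = (\<Sum>j<?m. G j)" unfolding G_def by (simp add: image_mset_sum)
  have "mset ms = image_mset ((!) ms) (mset [0..<?m])"
    by (metis map_nth mset_map)
  also have "mset [0..<?m] = (\<Sum>j<?m. {#j#})"
    by (simp add: mset_set_upto_eq_mset_upto)
  finally have "mset ms = image_mset ((!) ms) (\<Sum>j<?m. {#j#})" .
  also have "\<dots> = (\<Sum>j<?m. image_mset ((!) ms) {#j#})" by (rule image_mset_sum) simp
  finally have mm: "mset ms = (\<Sum>j<?m. {#ms ! j#})" by simp
  have sG: "\<And>j. j < ?m \<Longrightarrow> sum_mset (G j) = ms ! j"
  proof -
    fix j assume j: "j < ?m"
    have "sum_mset (G j) = sum_list (map ((!) lam) (filter (\<lambda>i. f i = j) [0..<?l]))"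
      unfolding G_def by (metis mset_map sum_mset_sum_list)
    also have "\<dots> = sum ((!) lam) (set (filter (\<lambda>i. f i = j) [0..<?l]))"
      by (rule sum_list_distinct_conv_sum_set) simp
    also have "set (filter (\<lambda>i. f i = j) [0..<?l]) = {i. i < ?l \<and> f i = j}" by auto
    finally show "sum_mset (G j) = ms ! j" using f(2) j by simp
  qed
  have "\<forall>j\<in>{..<?m}. mle (G j) {#ms ! j#}"
  proof
    fix j assume "j \<in> {..<?m}"
    then have j: "j < ?m" by simp
    have "G j \<noteq> {#}"
    proof
      assume "G j = {#}"
      then have "ms ! j = 0" using sG[OF j] by simp
      then show False using pos j by (metis nth_mem not_less_zero)
    qed
    then show "mle (G j) {#ms ! j#}" using mle_single sG[OF j] by metis
  qed
  then have "mle (\<Sum>j<?m. G j) (\<Sum>j<?m. {#ms ! j#})" by (intro mle_sum) auto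
  then show ?thesis using ml mm by simp
qed

lemma list_of_fam_lengths:
  "finite \<Phi> \<Longrightarrow> sizes \<Phi> = mset \<alpha> \<Longrightarrow> \<exists>E. distinct E \<and> set E = \<Phi> \<and> map length E = \<alpha>"
proof (induction \<alpha> arbitrary: \<Phi>)
  case Nil
  then have "image_mset length (mset_set \<Phi>) = {#}" unfolding sizes_def by simp
  then have "mset_set \<Phi> = {#}" by simp
  then have "\<Phi> = {}" using Nil.prems(1) by (simp add: mset_set_empty_iff)
  then show ?case by simp
next
  case (Cons a \<alpha>)
  have "a \<in># sizes \<Phi>" using Cons.prems(2) by simp
  then obtain c where c: "c \<in> \<Phi>" "length c = a" using in_sizes[OF Cons.prems(1)] by blast
  have "add_mset a (sizes (\<Phi> - {c})) = add_mset a (mset \<alpha>)"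
    using sizes_remove[OF Cons.prems(1) c(1)] Cons.prems(2) c(2) by simp
  then have "sizes (\<Phi> - {c}) = mset \<alpha>" by simp
  moreover have "finite (\<Phi> - {c})" using Cons.prems(1) by simp
  ultimately obtain E where E: "distinct E" "set E = \<Phi> - {c}" "map length E = \<alpha>"
    using Cons.IH by blast
  have d1: "distinct (c # E)" using E by simp
  have d2: "set (c # E) = \<Phi>" using E(2) c(1) by auto
  have d3: "map length (c # E) = a # \<alpha>" using E(3) c(2) by simp
  show ?case by (rule exI[of _ "c # E"], intro conjI d1 d2 d3)
qed

lemma sorted_fam_list:
  assumes f: "fam n \<Phi>"
  shows "\<exists>E. distinct E \<and> set E = \<Phi> \<and> sorted_wrt (\<lambda>c d. hd d < hd c) E"
proof -
  obtain xs where xs: "set xs = \<Phi>" "distinct xs" using finite_distinct_list[OF fam_finite[OF f]] by blast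
  define E where "E = rev (sort_key hd xs)"
  have inj: "inj_on hd \<Phi>"
  proof (rule inj_onI)
    fix c d assume cd: "c \<in> \<Phi>" "d \<in> \<Phi>" "hd c = hd d"
    show "c = d"
    proof (rule ccontr)
      assume "c \<noteq> d"
      then have "set c \<inter> set d = {}" using f cd unfolding fam_def by blast
      moreover have "c \<noteq> []" "d \<noteq> []" using f cd unfolding fam_def by auto
      ultimately show False using cd(3) by (metis disjoint_iff list.set_sel(1))
    qed
  qed
  have "sorted (map hd (sort_key hd xs))" by simp
  moreover have "distinct (map hd (sort_key hd xs))"
    using xs inj by (simp add: distinct_map)
  ultimately have "sorted_wrt (<) (map hd (sort_key hd xs))" by (simp add: strict_sorted_iff)
  then have "sorted_wrt (\<lambda>c d. hd c < hd d) (sort_key hd xs)" by (simp add: sorted_wrt_map)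
  then have "sorted_wrt (\<lambda>c d. hd d < hd c) E" unfolding E_def by (simp add: sorted_wrt_rev)
  moreover have "distinct E" "set E = \<Phi>" using xs unfolding E_def by auto
  ultimately show ?thesis by blast
qed

lemma sizes_list: "distinct E \<Longrightarrow> sizes (set E) = mset (map length E)"
  unfolding sizes_def by (simp add: mset_set_set)

theorem theorem3p7:
  fixes n :: nat and \<alpha> :: "nat list"
  assumes "\<alpha> \<in> Comps n"
  shows "kspan {w \<in> perms n. part_le (underlying_partition (cLRM' n w)) (underlying_partition \<alpha>)}
           (\<lambda>w. alg_mult n (BI n (LRM' n w)) (perm_elem w) :: (nat \<Rightarrow> nat) \<Rightarrow> 'k::comm_ring_1)
         = {alg_mult n (BI n (SetC \<alpha>)) a | a. a \<in> grp_alg n}"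
proof -
  note \<alpha> = assms
  define W where "W = {w \<in> perms n. part_le (underlying_partition (cLRM' n w)) (underlying_partition \<alpha>)}"
  define g where "g = (\<lambda>w. alg_mult n (BI n (LRM' n w)) (perm_elem w) :: (nat \<Rightarrow> nat) \<Rightarrow> 'k)"
  define RG where "RG = ({alg_mult n (BI n (SetC \<alpha>)) (perm_elem v) | v. v \<in> perms n} :: ((nat \<Rightarrow> nat) \<Rightarrow> 'k) set)"
  define LG where "LG = ({lin n \<Psi> | \<Psi>. fam n \<Psi> \<and> sizes \<Psi> = mset \<alpha>} :: ((nat \<Rightarrow> nat) \<Rightarrow> 'k) set)"
  have finW: "finite W" unfolding W_def using finite_perms by simp
  have up_mset: "\<And>x. mset (underlying_partition x) = mset x" unfolding underlying_partition_def by simp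
  have pos\<alpha>: "\<forall>a\<in>set (underlying_partition \<alpha>). a > 0"
    using Comps_pos[OF \<alpha>] unfolding underlying_partition_def by simp
  have LG_RG: "LG \<subseteq> RG"
  proof
    fix y assume "y \<in> LG"
    then obtain \<Psi> where \<Psi>: "y = lin n \<Psi>" "fam n \<Psi>" "sizes \<Psi> = mset \<alpha>" unfolding LG_def by blast
    obtain E where E: "distinct E" "set E = \<Psi>" "map length E = \<alpha>"
      using list_of_fam_lengths[OF fam_finite[OF \<Psi>(2)] \<Psi>(3)] by blast
    have fE: "fam n (set E)" using \<Psi>(2) E(2) by simp
    have "y = alg_mult n (BI n (SetC (map length E))) (perm_elem (wE n E))"
      using lin_wE[OF fE E(1)] \<Psi>(1) E(2) by simp
    then show "y \<in> RG" unfolding RG_def using wE_perms(1)[OF fE E(1)] E(3) by blast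
  qed
  have gW_R: "g ` W \<subseteq> spanned RG"
  proof
    fix y assume "y \<in> g ` W"
    then obtain w where w: "w \<in> W" "y = g w" by blast
    have wp: "w \<in> perms n" and pl: "part_le (underlying_partition (cLRM' n w)) (underlying_partition \<alpha>)"
      using w(1) unfolding W_def by auto
    have Isub: "LRM' n w \<subseteq> {1..n-1}" unfolding LRM'_def LRM_def by auto
    define \<beta> where "\<beta> = cLRM' n w"
    have b: "\<beta> \<in> Comps n" "SetC \<beta> = LRM' n w"
      using SetC_CompI[OF Isub] unfolding \<beta>_def cLRM'_def by auto
    have "y = alg_mult n (BI n (SetC \<beta>)) (perm_elem w)" using w(2) b(2) unfolding g_def by simp
    also have "\<dots> = lin n (set (blocks \<beta> w))" by (rule BI_blocks[OF b(1) wp])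
    finally have y: "y = lin n (set (blocks \<beta> w))" .
    have "mle (mset (underlying_partition \<beta>)) (mset (underlying_partition \<alpha>))"
      using part_le_mle[OF pl[folded \<beta>_def] pos\<alpha>] .
    then have "mle (sizes (set (blocks \<beta> w))) (mset \<alpha>)"
      using sizes_blocks[OF b(1) wp] up_mset by simp
    then have "y \<in> spanned LG"
      using merge_lemma[of "sizes (set (blocks \<beta> w))" "mset \<alpha>" n] fam_blocks(1)[OF b(1) wp] y
      unfolding LG_def by blast
    moreover have "spanned LG \<subseteq> spanned RG" using LG_RG by (intro sp_mono) (auto intro: sp_gen)
    ultimately show "y \<in> spanned RG" by blast
  qed
  have NG_gW: "(NG n (mset \<alpha>) :: ((nat \<Rightarrow> nat) \<Rightarrow> 'k) set) \<subseteq> g ` W"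
  proof
    fix y :: "(nat \<Rightarrow> nat) \<Rightarrow> 'k" assume "y \<in> NG n (mset \<alpha>)"
    then obtain \<Psi> where \<Psi>: "y = lin n \<Psi>" "fam n \<Psi>" "\<forall>c\<in>\<Psi>. hd c = Min (set c)" "mle (sizes \<Psi>) (mset \<alpha>)"
      unfolding NG_def by blast
    obtain E where E: "distinct E" "set E = \<Psi>" "sorted_wrt (\<lambda>c d. hd d < hd c) E"
      using sorted_fam_list[OF \<Psi>(2)] by blast
    have fE: "fam n (set E)" using \<Psi>(2) E(2) by simp
    define \<beta> where "\<beta> = map length E"
    have bc: "\<beta> \<in> Comps n" unfolding \<beta>_def by (rule fam_list_comp[OF fE E(1)])
    have lrm: "LRM' n (wE n E) = SetC \<beta>"
      unfolding \<beta>_def using LRM'_wE[OF fE E(1) _ E(3)] \<Psi>(3) E(2) by simp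
    have clrm: "cLRM' n (wE n E) = \<beta>" unfolding cLRM'_def lrm by (rule CompI_SetC[OF bc])
    have "sizes \<Psi> = mset \<beta>" unfolding \<beta>_def using sizes_list[OF E(1)] E(2) by simp
    then have "mle (mset (underlying_partition \<beta>)) (mset (underlying_partition \<alpha>))"
      using \<Psi>(4) up_mset by simp
    then have "part_le (underlying_partition \<beta>) (underlying_partition \<alpha>)"
      using mle_part_le by blast
    then have wW: "wE n E \<in> W" unfolding W_def using wE_perms(1)[OF fE E(1)] clrm by simp
    have "g (wE n E) = alg_mult n (BI n (SetC \<beta>)) (perm_elem (wE n E))" unfolding g_def lrm by simp
    also have "\<dots> = lin n (set E)" unfolding \<beta>_def by (rule lin_wE[OF fE E(1), symmetric])
    also have "\<dots> = y" using \<Psi>(1) E(2) by simp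
    finally show "y \<in> g ` W" using wW by blast
  qed
  have RG_gW: "RG \<subseteq> spanned (g ` W)"
  proof
    fix y assume "y \<in> RG"
    then obtain v where v: "v \<in> perms n" "y = alg_mult n (BI n (SetC \<alpha>)) (perm_elem v)" unfolding RG_def by blast
    have y: "y = lin n (set (blocks \<alpha> v))" using v BI_blocks[OF \<alpha> v(1)] by simp
    have "mle (sizes (set (blocks \<alpha> v))) (mset \<alpha>)" using sizes_blocks[OF \<alpha> v(1)] by simp
    then have "y \<in> spanned (NG n (mset \<alpha>))" using straighten fam_blocks(1)[OF \<alpha> v(1)] y by blast
    moreover have "spanned (NG n (mset \<alpha>)) \<subseteq> spanned (g ` W)" using NG_gW by (intro sp_mono) (auto intro: sp_gen)
    ultimately show "y \<in> spanned (g ` W)" by blast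
  qed
  have "kspan W g = spanned (g ` W)" by (rule kspan_eq_spanned[OF finW])
  also have "\<dots> = spanned RG"
    using sp_mono[OF gW_R] sp_mono[OF RG_gW] by blast
  also have "\<dots> = {alg_mult n (BI n (SetC \<alpha>)) a | a. a \<in> grp_alg n}"
    unfolding RG_def by (rule R_eq_spanned[symmetric])
  finally show ?thesis unfolding W_def g_def .
qed

end
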